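(* Let $n\in\mathbb N$ and let $\mathcal A(S^1)^{(n)}$ be the algebra of lower-triangular $n\times n$ complex Toeplitz matrices. If $\phi:\mathcal A(S^1)^{(n)}\to M_n(\mathbb C)$ is a unital linear isometry (with respect to the operator norm), then there exists a unitary $v\in M_n(\mathbb C)$ such that $\phi(a)=v^*av$ for every $a\in\mathcal A(S^1)^{(n)}$.
   Context: A Toeplitz matrix is a matrix $[\tau_{k-\ell}]_{k,\ell=0}^{n-1}$; it is lower-triangular when $\tau_j=0$ for $j<0$. Unital means $\phi$ maps the identity matrix to the identity matrix. *)

theory Defs
  imports "HOL-Analysis.Analysis"
begin

text \<open>Matrices are elements of complex^'n^'n, where the finite index type 'n carries a
linear order; the position of an index i in the order (0,...,n-1) is idx i.\<close>

definition idx :: "'n::{finite,linorder} \<Rightarrow> nat" where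
  "idx i = card {j. j < i}"

definition lt_toeplitz :: "(complex^('n::{finite,linorder})^('n::{finite,linorder})) set" where
  "lt_toeplitz = {A. \<exists>\<tau>::nat \<Rightarrow> complex. \<forall>i j.
      A $ i $ j = (if idx j \<le> idx i then \<tau> (idx i - idx j) else 0)}"

definition opnorm :: "complex^'n^'m \<Rightarrow> real" where
  "opnorm A = onorm (\<lambda>x. A *v x)"

definition cscale :: "complex \<Rightarrow> complex^'n^'m \<Rightarrow> complex^'n^'m" where
  "cscale c A = (\<chi> i j. c * A $ i $ j)"

definition cadj :: "complex^'n^'m \<Rightarrow> complex^'m^'n" where
  "cadj A = (\<chi> i j. cnj (A $ j $ i))"

definition unitary_mat :: "complex^'n^'n \<Rightarrow> bool" where
  "unitary_mat v \<longleftrightarrow> cadj v ** v = mat 1 \<and> v ** cadj v = mat 1"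

end

theory Submission
  imports Defs
begin


lemma idx_less: "idx (i::'n::{finite,linorder}) < CARD('n)"
proof -
  have "{j. j < i} \<subset> (UNIV::'n set)" by auto
  then show ?thesis unfolding idx_def by (simp add: psubset_card_mono)
qed

lemma idx_mono: "(i::'n::{finite,linorder}) < i' \<Longrightarrow> idx i < idx i'"
proof -
  assume "i < i'"
  then have "{j. j < i} \<subset> {j. j < i'}" by auto
  then show ?thesis unfolding idx_def by (simp add: psubset_card_mono)
qed

lemma idx_eq_iff[simp]: "idx (i::'n::{finite,linorder}) = idx j \<longleftrightarrow> i = j"
  by (metis idx_mono less_irrefl neqE)

lemma idx_le_iff: "idx (i::'n::{finite,linorder}) \<le> idx j \<longleftrightarrow> i \<le> j"
  by (metis idx_mono leD le_less linorder_le_less_linear idx_eq_iff)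

lemma idx_less_iff: "idx (i::'n::{finite,linorder}) < idx j \<longleftrightarrow> i < j"
  by (metis idx_le_iff not_le)

lemma idx_inj: "inj (idx :: 'n::{finite,linorder} \<Rightarrow> nat)"
  by (simp add: inj_def)

lemma idx_range: "range (idx :: 'n::{finite,linorder} \<Rightarrow> nat) = {..<CARD('n)}"
proof -
  have sub: "range (idx :: 'n \<Rightarrow> nat) \<subseteq> {..<CARD('n)}" using idx_less by auto
  have "card (range (idx :: 'n \<Rightarrow> nat)) = CARD('n)"
    using card_image[OF idx_inj] by simp
  then show ?thesis using sub by (intro card_subset_eq) auto
qed

lemma idx_surj: "m < CARD('n::{finite,linorder}) \<Longrightarrow> \<exists>i::'n. idx i = m"
  using idx_range by (metis lessThan_iff rangeE)

section \<open>Shift matrices and the Toeplitz algebra\<close>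

definition shm :: "nat \<Rightarrow> complex^('n::{finite,linorder})^('n::{finite,linorder})" where
  "shm d = (\<chi> i j. if idx i = idx j + d then 1 else 0)"

lemma cscale_nth[simp]: "cscale c A $ i $ j = c * A $ i $ j"
  by (simp add: cscale_def)

lemma cadj_nth[simp]: "cadj A $ i $ j = cnj (A $ j $ i)"
  by (simp add: cadj_def)

lemma shm_nth: "shm d $ i $ j = (if idx i = idx j + d then 1 else 0)"
  by (simp add: shm_def)

lemma shm_0: "shm 0 = mat 1"
  by (simp add: shm_def mat_def vec_eq_iff)

lemma shm_LT: "shm d \<in> lt_toeplitz"
  unfolding lt_toeplitz_def
  by (rule CollectI, rule exI[of _ "\<lambda>k. if k = d then 1 else 0"]) (auto simp: shm_nth)

lemma LT_add: "a \<in> lt_toeplitz \<Longrightarrow> b \<in> lt_toeplitz \<Longrightarrow> a + b \<in> lt_toeplitz"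
  unfolding lt_toeplitz_def
proof (clarify)
  fix \<tau>1 \<tau>2 assume h1: "\<forall>i j. a $ i $ j = (if idx j \<le> idx i then \<tau>1 (idx i - idx j) else 0)"
    and h2: "\<forall>i j. b $ i $ j = (if idx j \<le> idx i then \<tau>2 (idx i - idx j) else 0)"
  show "\<exists>\<tau>. \<forall>i j. (a + b) $ i $ j = (if idx j \<le> idx i then \<tau> (idx i - idx j) else 0)"
    by (rule exI[of _ "\<lambda>k. \<tau>1 k + \<tau>2 k"]) (simp add: h1 h2)
qed

lemma LT_scale: "a \<in> lt_toeplitz \<Longrightarrow> cscale c a \<in> lt_toeplitz"
  unfolding lt_toeplitz_def
proof (clarify)
  fix \<tau>1 assume h1: "\<forall>i j. a $ i $ j = (if idx j \<le> idx i then \<tau>1 (idx i - idx j) else 0)"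
  show "\<exists>\<tau>. \<forall>i j. cscale c a $ i $ j = (if idx j \<le> idx i then \<tau> (idx i - idx j) else 0)"
    by (rule exI[of _ "\<lambda>k. c * \<tau>1 k"]) (simp add: h1)
qed

lemma LT_0: "0 \<in> lt_toeplitz"
  unfolding lt_toeplitz_def by (rule CollectI, rule exI[of _ "\<lambda>k. 0"]) simp

lemma LT_1: "mat 1 \<in> lt_toeplitz"
  using shm_LT[of 0] shm_0 by metis

lemma LT_sum: "finite D \<Longrightarrow> (\<And>d. d \<in> D \<Longrightarrow> f d \<in> lt_toeplitz) \<Longrightarrow> sum f D \<in> lt_toeplitz"
  by (induction D rule: finite_induct) (auto intro: LT_add LT_0)

lemma LT_decomp:
  assumes "a \<in> (lt_toeplitz :: (complex^('n::{finite,linorder})^('n::{finite,linorder})) set)"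
  shows "\<exists>\<tau>. a = (\<Sum>d<CARD('n). cscale (\<tau> d) (shm d))"
proof -
  obtain \<tau> where h: "\<forall>i j. a $ i $ j = (if idx j \<le> idx i then \<tau> (idx i - idx j) else 0)"
    using assms unfolding lt_toeplitz_def by blast
  have e: "a $ i $ j = (\<Sum>d<CARD('n). (cscale (\<tau> d) (shm d)) $ i $ j)" for i j
  proof -
    have "(\<Sum>d<CARD('n). (cscale (\<tau> d) (shm d)) $ i $ j)
        = (\<Sum>d<CARD('n). (if d = idx i - idx j then (if idx j \<le> idx i then \<tau> d else 0) else 0))"
      by (intro sum.cong refl) (auto simp: shm_nth)
    also have "\<dots> = (if idx j \<le> idx i then \<tau> (idx i - idx j) else 0)"
      using idx_less[of i] by (simp add: sum.delta) linarith
    finally show ?thesis using h by simp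
  qed
  have "a = (\<Sum>d<CARD('n). cscale (\<tau> d) (shm d))"
    unfolding vec_eq_iff using e by (simp del: cscale_nth)
  then show ?thesis by blast
qed


definition ci :: "complex^'n \<Rightarrow> complex^'n \<Rightarrow> complex" where
  "ci x y = (\<Sum>i\<in>UNIV. cnj (x$i) * y$i)"

lemma ci_adj: "ci x (A *v y) = ci (cadj A *v x) y"
proof -
  have "ci x (A *v y) = (\<Sum>i\<in>UNIV. \<Sum>j\<in>UNIV. cnj (x$i) * A$i$j * y$j)"
    by (simp add: ci_def matrix_vector_mult_def sum_distrib_left mult.assoc)
  also have "\<dots> = (\<Sum>j\<in>UNIV. \<Sum>i\<in>UNIV. cnj (x$i) * A$i$j * y$j)"
    by (rule sum.swap)
  also have "\<dots> = ci (cadj A *v x) y"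
    by (simp add: ci_def matrix_vector_mult_def sum_distrib_left sum_distrib_right mult_ac)
  finally show ?thesis .
qed

lemma Re_ci: "Re (ci x y) = inner x y"
  by (simp add: ci_def inner_vec_def inner_complex_def)

lemma ci_cnj: "cnj (ci x y) = ci y x"
  by (simp add: ci_def mult.commute)

lemma ci_self: "ci x x = of_real ((norm x)^2)"
proof -
  have "Im (ci x x) = 0" by (simp add: ci_def mult.commute)
  then have "ci x x = of_real (Re (ci x x))" by (simp add: complex_eq_iff)
  then show ?thesis by (simp add: Re_ci power2_norm_eq_inner)
qed

lemma ci_add_right: "ci x (y + z) = ci x y + ci x z"
  by (simp add: ci_def distrib_left sum.distrib)
lemma ci_add_left: "ci (x + y) z = ci x z + ci y z"
  by (simp add: ci_def distrib_right sum.distrib)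
lemma ci_diff_right: "ci x (y - z) = ci x y - ci x z"
  by (simp add: ci_def right_diff_distrib sum_subtractf)
lemma ci_diff_left: "ci (x - y) z = ci x z - ci y z"
  by (simp add: ci_def left_diff_distrib sum_subtractf)
lemma ci_scale_right: "ci x (c *s y) = c * ci x y"
  by (simp add: ci_def sum_distrib_left mult_ac)
lemma ci_scale_left: "ci (c *s x) y = cnj c * ci x y"
  by (simp add: ci_def sum_distrib_left mult_ac)
lemma ci_zero_right[simp]: "ci x 0 = 0" by (simp add: ci_def)
lemma ci_zero_left[simp]: "ci 0 x = 0" by (simp add: ci_def)

lemma mv_scale: "A *v (c *s x) = c *s (A *v (x::complex^'n))"
  by (simp add: matrix_vector_mult_def vec_eq_iff sum_distrib_left mult_ac)

lemma cscale_mv: "cscale c A *v x = c *s (A *v (x::complex^'n))"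
  by (simp add: matrix_vector_mult_def vec_eq_iff sum_distrib_left mult_ac cscale_def)

lemma scaleR_comp: "(t *\<^sub>R (x::complex^'n)) $ j = complex_of_real t * x $ j"
proof -
  have "(t *\<^sub>R x) $ j = t *\<^sub>R (x $ j)" by (rule vector_scaleR_component)
  also have "\<dots> = complex_of_real t * x $ j" by (rule scaleR_conv_of_real)
  finally show ?thesis .
qed

lemma mv_scaleR: "A *v (t *\<^sub>R x) = t *\<^sub>R (A *v (x::complex^'n))"
  by (simp add: matrix_vector_mult_def vec_eq_iff scaleR_comp mult_ac sum_distrib_left del: vector_scaleR_component)

lemma scaleR_is_s: "t *\<^sub>R (x::complex^'n) = complex_of_real t *s x"
  by (simp add: vec_eq_iff scaleR_comp del: vector_scaleR_component)

lemma norm_s: "norm (c *s (x::complex^'n)) = norm c * norm x"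
proof -
  have "(norm (c *s x))^2 = (norm c * norm x)^2"
  proof -
    have "complex_of_real ((norm (c *s x))^2) = ci (c *s x) (c *s x)" by (simp add: ci_self)
    also have "\<dots> = cnj c * c * ci x x" by (simp add: ci_scale_left ci_scale_right)
    also have "\<dots> = complex_of_real ((norm c * norm x)^2)"
    proof -
      have "cnj c * c = complex_of_real ((norm c)^2)" by (metis complex_norm_square mult.commute)
      then show ?thesis by (simp add: ci_self power_mult_distrib)
    qed
    finally show ?thesis using of_real_eq_iff by blast
  qed
  then show ?thesis by (simp add: power2_eq_iff_nonneg)
qed

lemma cscale_add: "cscale c (A + B) = cscale c A + cscale c B"
  by (simp add: cscale_def vec_eq_iff distrib_left)
lemma cscale_add_left: "cscale (c + d) A = cscale c A + cscale d A"
  by (simp add: cscale_def vec_eq_iff distrib_right)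
lemma cscale_mult: "cscale c (cscale d A) = cscale (c * d) A"
  by (simp add: cscale_def vec_eq_iff mult_ac)
lemma cscale_one[simp]: "cscale 1 A = A"
  by (simp add: cscale_def vec_eq_iff)
lemma cscale_zero[simp]: "cscale 0 A = 0"
  by (simp add: cscale_def vec_eq_iff)
lemma cscale_zero_right[simp]: "cscale c 0 = 0"
  by (simp add: cscale_def vec_eq_iff)
lemma cscale_sum: "cscale c (sum f D) = (\<Sum>d\<in>D. cscale c (f d))"
  by (simp add: cscale_def vec_eq_iff sum_distrib_left)
lemma cscale_sum_left: "cscale (sum g D) A = (\<Sum>d\<in>D. cscale (g d) A)"
  by (simp add: cscale_def vec_eq_iff sum_distrib_right)
lemma cscale_minus: "cscale (-1) A = - A"
  by (simp add: cscale_def vec_eq_iff)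

lemma cadj_cadj[simp]: "cadj (cadj A) = A"
  by (simp add: cadj_def vec_eq_iff)
lemma cadj_add: "cadj (A + B) = cadj A + cadj B"
  by (simp add: cadj_def vec_eq_iff)
lemma cadj_diff: "cadj (A - B) = cadj A - cadj B"
  by (simp add: cadj_def vec_eq_iff)
lemma cadj_cscale: "cadj (cscale c A) = cscale (cnj c) (cadj A)"
  by (simp add: cadj_def vec_eq_iff)
lemma cadj_sum: "cadj (sum f D) = (\<Sum>d\<in>D. cadj (f d))"
  by (simp add: cadj_def vec_eq_iff)
lemma cadj_mat[simp]: "cadj (mat 1 :: complex^'n^'n) = mat 1"
  by (simp add: cadj_def vec_eq_iff mat_def)
lemma cadj_zero[simp]: "cadj 0 = 0"
  by (simp add: cadj_def vec_eq_iff)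
lemma cadj_mult: "cadj (A ** B) = cadj B ** cadj (A :: complex^'n^'m)"
  by (simp add: cadj_def vec_eq_iff matrix_matrix_mult_def mult.commute)

lemma cscale_mm_left: "cscale c A ** B = cscale c (A ** (B::complex^'p^'n))"
  by (simp add: cscale_def vec_eq_iff matrix_matrix_mult_def sum_distrib_left mult_ac)
lemma cscale_mm_right: "A ** cscale c B = cscale c (A ** (B::complex^'p^'n))"
  by (simp add: cscale_def vec_eq_iff matrix_matrix_mult_def sum_distrib_left mult_ac)
lemma mm_add_right: "(A + B) ** C = A ** C + B ** (C::complex^'p^'n)"
  by (simp add: vec_eq_iff matrix_matrix_mult_def distrib_right sum.distrib)
lemma mm_diff_right: "(A - B) ** C = A ** C - B ** (C::complex^'p^'n)"
  by (simp add: vec_eq_iff matrix_matrix_mult_def left_diff_distrib sum_subtractf)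
lemma mm_diff_left: "C ** (A - B) = C ** A - C ** (B::complex^'p^'n)"
  by (simp add: vec_eq_iff matrix_matrix_mult_def right_diff_distrib sum_subtractf)
lemma mm_sum_left: "(sum f D) ** (B::complex^'p^'n) = (\<Sum>d\<in>D. f d ** B)"
proof -
  have "\<And>i j. (\<Sum>k\<in>UNIV. (\<Sum>d\<in>D. f d $ i $ k) * B $ k $ j) = (\<Sum>d\<in>D. \<Sum>k\<in>UNIV. f d $ i $ k * B $ k $ j)"
    by (simp add: sum_distrib_right) (rule sum.swap)
  then show ?thesis by (simp add: vec_eq_iff matrix_matrix_mult_def)
qed
lemma mm_sum_right: "(B::complex^'p^'n) ** (sum f D) = (\<Sum>d\<in>D. B ** f d)"
proof -
  have "\<And>i j. (\<Sum>k\<in>UNIV. B $ i $ k * (\<Sum>d\<in>D. f d $ k $ j)) = (\<Sum>d\<in>D. \<Sum>k\<in>UNIV. B $ i $ k * f d $ k $ j)"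
    by (simp add: sum_distrib_left) (rule sum.swap)
  then show ?thesis by (simp add: vec_eq_iff matrix_matrix_mult_def)
qed
lemma mv_sum_left: "(sum f D) *v (x::complex^'n) = (\<Sum>d\<in>D. f d *v x)"
proof -
  have "\<And>i. (\<Sum>k\<in>UNIV. (\<Sum>d\<in>D. f d $ i $ k) * x $ k) = (\<Sum>d\<in>D. \<Sum>k\<in>UNIV. f d $ i $ k * x $ k)"
    by (simp add: sum_distrib_right) (rule sum.swap)
  then show ?thesis by (simp add: vec_eq_iff matrix_vector_mult_def)
qed

lemma inner_sum_right: "inner x (sum f D) = (\<Sum>d\<in>D. inner x (f d))"
  by (rule inner_sum_right)

lemma inner_cadj: "inner x (cadj X *v x) = inner x (X *v (x::complex^'n))"
proof -
  have "inner x (cadj X *v x) = Re (ci x (cadj X *v x))" by (simp add: Re_ci)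
  also have "\<dots> = Re (ci (X *v x) x)" by (simp add: ci_adj)
  also have "\<dots> = Re (ci x (X *v x))" by (subst ci_cnj[symmetric]) simp
  finally show ?thesis by (simp add: Re_ci)
qed

definition herm :: "complex^'n^'n \<Rightarrow> bool" where "herm H \<longleftrightarrow> cadj H = H"

lemma herm_inner: "herm H \<Longrightarrow> inner y (H *v u) = inner (H *v y) (u::complex^'n)"
  unfolding herm_def by (metis Re_ci ci_adj)

lemma herm_ci: "herm H \<Longrightarrow> ci y (H *v u) = ci (H *v y) (u::complex^'n)"
  unfolding herm_def by (metis ci_adj)

lemma herm_ci_real: "herm H \<Longrightarrow> ci y (H *v y) = of_real (inner y (H *v (y::complex^'n)))"
proof -
  assume h: "herm H"
  have "cnj (ci y (H *v y)) = ci y (H *v y)" using herm_ci[OF h] ci_cnj by metis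
  then have "Im (ci y (H *v y)) = 0" by (metis cnj.sel(2) neg_equal_zero)
  then show ?thesis by (simp add: complex_eq_iff Re_ci)
qed



section \<open>Positive semidefinite facts and the rank-one lemma\<close>

lemma psd_zero:
  fixes R :: "complex^'n^'n"
  assumes hR: "herm R" and pos: "\<forall>x. 0 \<le> inner x (R *v x)" and y0: "inner y (R *v y) = 0"
  shows "R *v y = 0"
proof (rule ccontr)
  assume ne: "R *v y \<noteq> 0"
  define u where "u = R *v y"
  define s where "s = inner u u"
  define c where "c = inner u (R *v u)"
  have s_pos: "s > 0" using ne by (simp add: s_def u_def)
  have key: "0 \<le> 2 * t * s + t^2 * c" for t :: real
  proof -
    have "0 \<le> inner (y + t *\<^sub>R u) (R *v (y + t *\<^sub>R u))" using pos by blast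
    also have "\<dots> = inner y (R *v y) + t * inner y (R *v u) + t * inner u (R *v y) + t^2 * inner u (R *v u)"
      by (simp add: matrix_vector_right_distrib mv_scaleR inner_add_left inner_add_right power2_eq_square algebra_simps)
    also have "inner y (R *v u) = s" using herm_inner[OF hR, of y u] by (simp add: s_def u_def)
    also have "inner u (R *v y) = s" by (simp add: s_def u_def)
    finally show ?thesis using y0 by (simp add: c_def mult_ac)
  qed
  define a where "a = \<bar>c\<bar> + 1"
  define t where "t = - s / a"
  have apos: "a > 0" by (simp add: a_def)
  have ta: "t * a = - s" using apos by (simp add: t_def)
  have e: "(2 * t * s + t^2 * \<bar>c\<bar>) * a^2 = 2 * (t * a) * s * a + (t * a)^2 * \<bar>c\<bar>"
    by (simp add: algebra_simps power2_eq_square)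
  also have "\<dots> = 2 * (- s) * s * a + (- s)^2 * \<bar>c\<bar>" by (simp only: ta)
  also have "\<dots> = s^2 * (\<bar>c\<bar> - 2 * a)" by (simp add: algebra_simps power2_eq_square)
  finally have e2: "(2 * t * s + t^2 * \<bar>c\<bar>) * a^2 = s^2 * (\<bar>c\<bar> - 2 * a)" .
  have "s^2 * (\<bar>c\<bar> - 2 * a) < 0" using s_pos by (intro mult_pos_neg) (auto simp: a_def)
  then have "(2 * t * s + t^2 * \<bar>c\<bar>) * a^2 < 0" using e2 by simp
  then have neg: "2 * t * s + t^2 * \<bar>c\<bar> < 0" using apos by (auto simp: mult_less_0_iff)
  have "2 * t * s + t^2 * c \<le> 2 * t * s + t^2 * \<bar>c\<bar>"
    by (intro add_left_mono mult_left_mono) auto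
  also note neg
  finally show False using key[of t] by linarith
qed

definition outer :: "complex^'n \<Rightarrow> complex^'n \<Rightarrow> complex^'n^'n" where
  "outer x y = (\<chi> i j. x$i * cnj (y$j))"

lemma outer_mv: "outer x y *v z = ci y z *s x"
  by (simp add: outer_def matrix_vector_mult_def ci_def vec_eq_iff sum_distrib_left mult_ac)

lemma outer_herm: "herm (outer x x)"
  by (simp add: herm_def outer_def cadj_def vec_eq_iff mult.commute)

lemma outer_mm: "outer a b ** outer c d = cscale (ci b c) (outer a d)"
  by (simp add: outer_def matrix_matrix_mult_def ci_def vec_eq_iff sum_distrib_left sum_distrib_right mult_ac)

definition rtr :: "complex^'n^'n \<Rightarrow> real" where "rtr M = (\<Sum>i\<in>UNIV. Re (M$i$i))"

lemma diag_inner: "Re ((M::complex^'n^'n)$i$i) = inner (axis i 1) (M *v axis i (1::complex))"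
proof -
  have "(M *v axis i 1) $ i = M$i$i"
    by (simp add: matrix_vector_mult_def axis_def if_distrib cong: if_cong)
  moreover have "inner (axis i 1) v = Re (v $ i)" for v :: "complex^'n"
    by (simp add: inner_axis' inner_complex_def)
  ultimately show ?thesis by simp
qed

lemma col_of_axis: "((M::complex^'n^'m) *v axis i (1::complex)) $ j = M $ j $ i"
  by (simp add: matrix_vector_mult_def axis_def if_distrib cong: if_cong)

lemma rtr_add: "rtr (A + B) = rtr A + rtr B"
  by (simp add: rtr_def sum.distrib)
lemma rtr_diff: "rtr (A - B) = rtr A - rtr B"
  by (simp add: rtr_def sum_subtractf)
lemma rtr_sum: "rtr (sum f D) = (\<Sum>d\<in>D. rtr (f d))"
  by (simp add: rtr_def) (rule sum.swap)
lemma rtr_mat1: "rtr (mat 1 :: complex^'n^'n) = real CARD('n)"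
  by (simp add: rtr_def mat_def)
lemma rtr_outer: "rtr (outer x x) = (norm x)^2"
proof -
  have "complex_of_real (rtr (outer x x)) = complex_of_real (Re (ci x x))"
    by (simp add: rtr_def outer_def ci_def mult.commute)
  then show ?thesis by (simp add: Re_ci power2_norm_eq_inner)
qed

lemma psd_rtr_zero:
  fixes Q :: "complex^'n^'n"
  assumes hQ: "herm Q" and pos: "\<forall>x. 0 \<le> inner x (Q *v x)" and z: "rtr Q = 0"
  shows "Q = 0"
proof -
  have nn: "\<forall>i\<in>UNIV. 0 \<le> Re (Q$i$i)"
  proof
    fix i :: 'n
    show "0 \<le> Re (Q$i$i)" unfolding diag_inner using pos by blast
  qed
  have zz: "\<forall>i\<in>UNIV. Re (Q$i$i) = 0"
    using z nn unfolding rtr_def by (simp add: sum_nonneg_eq_0_iff)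
  have col: "Q *v axis i 1 = 0" for i
  proof (rule psd_zero[OF hQ pos])
    show "inner (axis i 1) (Q *v axis i 1) = 0" using zz diag_inner[of Q i] by simp
  qed
  show ?thesis
  proof (rule vec_eq_iff[THEN iffD2], intro allI)
    fix j
    show "Q $ j = 0 $ j"
    proof (rule vec_eq_iff[THEN iffD2], intro allI)
      fix i
      have "Q $ j $ i = (Q *v axis i 1) $ j" by (simp add: col_of_axis)
      then show "Q $ j $ i = 0 $ j $ i" using col[of i] by simp
    qed
  qed
qed

lemma rank1:
  fixes P :: "nat \<Rightarrow> complex^'n^'n"
  assumes hP: "\<forall>k<CARD('n). herm (P k)"
    and psd: "\<forall>k<CARD('n). \<forall>x. 0 \<le> inner x (P k *v x)"
    and le1: "\<forall>k<CARD('n). \<forall>x. inner x (P k *v x) \<le> (norm x)^2"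
    and att: "\<forall>k<CARD('n). \<exists>x. norm x = 1 \<and> inner x (P k *v x) = 1"
    and sm: "(\<Sum>k<CARD('n). P k) = mat 1"
  shows "\<forall>k<CARD('n). \<forall>l<CARD('n). P k ** P l = (if k = l then P k else 0)"
proof -
  let ?m = "CARD('n)"
  obtain xs where xs: "\<forall>k<?m. norm (xs k) = 1 \<and> inner (xs k) (P k *v xs k) = 1"
    using att by metis
  have S1: "P k *v xs k = xs k" if k: "k < ?m" for k
  proof -
    let ?R = "mat 1 - P k"
    have hR: "herm ?R" using hP k by (simp add: herm_def cadj_diff)
    have pR: "\<forall>x. 0 \<le> inner x (?R *v x)"
      using le1 k by (simp add: matrix_vector_mult_diff_rdistrib inner_diff_right power2_norm_eq_inner)
    have "inner (xs k) (?R *v xs k) = 0"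
      using xs k by (simp add: matrix_vector_mult_diff_rdistrib inner_diff_right power2_norm_eq_inner[symmetric])
    then have "?R *v xs k = 0" using psd_zero[OF hR pR] by blast
    then show ?thesis by (simp add: matrix_vector_mult_diff_rdistrib)
  qed
  have S2: "P l *v xs k = 0" if k: "k < ?m" and l: "l < ?m" and kl: "l \<noteq> k" for k l
  proof -
    have "(\<Sum>j<?m. inner (xs k) (P j *v xs k)) = inner (xs k) ((\<Sum>j<?m. P j) *v xs k)"
      by (simp add: mv_sum_left inner_sum_right)
    also have "\<dots> = 1" using sm xs k by (simp add: power2_norm_eq_inner[symmetric])
    finally have tot: "(\<Sum>j<?m. inner (xs k) (P j *v xs k)) = 1" .
    have "(\<Sum>j<?m. inner (xs k) (P j *v xs k)) = inner (xs k) (P k *v xs k) + (\<Sum>j\<in>{..<?m} - {k}. inner (xs k) (P j *v xs k))"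
      using k by (simp add: sum.remove)
    then have "(\<Sum>j\<in>{..<?m} - {k}. inner (xs k) (P j *v xs k)) = 0" using tot xs k by simp
    moreover have "\<forall>j\<in>{..<?m} - {k}. 0 \<le> inner (xs k) (P j *v xs k)" using psd by auto
    ultimately have "\<forall>j\<in>{..<?m} - {k}. inner (xs k) (P j *v xs k) = 0"
      using sum_nonneg_eq_0_iff[of "{..<?m} - {k}" "\<lambda>j. inner (xs k) (P j *v xs k)"] by auto
    then have "inner (xs k) (P l *v xs k) = 0" using l kl by auto
    then show ?thesis using psd_zero[of "P l" "xs k"] hP psd l by blast
  qed
  define Q where "Q k = P k - outer (xs k) (xs k)" for k
  have hQ: "herm (Q k)" if "k < ?m" for k
    using hP that outer_herm[of "xs k"] by (simp add: Q_def herm_def cadj_diff)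
  have pQ: "\<forall>y. 0 \<le> inner y (Q k *v y)" if k: "k < ?m" for k
  proof
    fix y
    define \<alpha> where "\<alpha> = ci (xs k) y"
    define y' where "y' = y - \<alpha> *s xs k"
    have hk: "herm (P k)" using hP k by blast
    have c1: "ci (xs k) (P k *v y) = \<alpha>"
      using herm_ci[OF hk, of "xs k" y] S1[OF k] by (simp add: \<alpha>_def)
    have c2: "ci y (xs k) = cnj \<alpha>" by (simp add: \<alpha>_def ci_cnj)
    have c3: "ci (xs k) (xs k) = 1" using xs k by (simp add: ci_self)
    have Py': "P k *v y' = P k *v y - \<alpha> *s xs k"
      by (simp add: y'_def matrix_vector_mult_diff_distrib mv_scale S1[OF k])
    have "ci y' (P k *v y') = ci y (P k *v y) - \<alpha> * ci y (xs k) - cnj \<alpha> * ci (xs k) (P k *v y) + cnj \<alpha> * \<alpha> * ci (xs k) (xs k)"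
      unfolding Py' unfolding y'_def
      by (simp only: ci_diff_left ci_diff_right ci_scale_left ci_scale_right) (simp add: algebra_simps)
    also have "\<dots> = ci y (P k *v y) - \<alpha> * cnj \<alpha>" unfolding c1 c2 c3 by simp
    finally have "ci y' (P k *v y') = ci y (P k *v y) - \<alpha> * cnj \<alpha>" .
    then have "inner y' (P k *v y') = inner y (P k *v y) - Re (\<alpha> * cnj \<alpha>)"
      by (metis Re_ci minus_complex.sel(1))
    moreover have "0 \<le> inner y' (P k *v y')" using psd k by blast
    moreover have "inner y (outer (xs k) (xs k) *v y) = Re (\<alpha> * cnj \<alpha>)"
      by (simp add: outer_mv Re_ci[symmetric] ci_scale_right c2 \<alpha>_def)
    ultimately show "0 \<le> inner y (Q k *v y)"
      by (simp add: Q_def matrix_vector_mult_diff_rdistrib inner_diff_right)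
  qed
  have trQ: "rtr (Q k) = rtr (P k) - 1" if k: "k < ?m" for k
    using xs k by (simp add: Q_def rtr_diff rtr_outer)
  have trQnn: "0 \<le> rtr (Q k)" if k: "k < ?m" for k
    unfolding rtr_def by (rule sum_nonneg) (simp add: diag_inner pQ[OF k])
  have "(\<Sum>k<?m. rtr (Q k)) = (\<Sum>k<?m. rtr (P k)) - real ?m"
    using trQ by (simp add: sum_subtractf)
  also have "(\<Sum>k<?m. rtr (P k)) = real ?m"
    using sm rtr_sum[of P "{..<?m}"] rtr_mat1 by metis
  finally have "(\<Sum>k<?m. rtr (Q k)) = 0" by simp
  then have "\<forall>k\<in>{..<?m}. rtr (Q k) = 0"
    using trQnn sum_nonneg_eq_0_iff[of "{..<?m}" "\<lambda>k. rtr (Q k)"] by auto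
  then have Q0: "Q k = 0" if "k < ?m" for k
    using psd_rtr_zero[OF hQ pQ] that by blast
  have Pk: "P k = outer (xs k) (xs k)" if "k < ?m" for k
    using Q0[OF that] by (simp add: Q_def)
  have orth: "ci (xs l) (xs k) = 0" if "k < ?m" "l < ?m" "l \<noteq> k" for k l
  proof -
    have "ci (xs l) (xs k) *s xs l = 0" using S2[OF that] Pk[OF that(2)] by (simp add: outer_mv)
    moreover have "xs l \<noteq> 0" using xs that(2) by auto
    ultimately show ?thesis by simp
  qed
  show ?thesis
  proof (intro allI impI)
    fix k l assume k: "k < ?m" and l: "l < ?m"
    show "P k ** P l = (if k = l then P k else 0)"
    proof (cases "k = l")
      case True
      have "ci (xs k) (xs k) = 1" using xs k by (simp add: ci_self)
      then show ?thesis using True Pk[OF k] by (simp add: outer_mm)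
    next
      case False
      have "ci (xs k) (xs l) = 0" using orth[OF l k] False by (metis ci_cnj complex_cnj_zero)
      then show ?thesis using False Pk[OF k] Pk[OF l] by (simp add: outer_mm)
    qed
  qed
qed



lemma mv_bl: "bounded_linear (\<lambda>x. (A::complex^'n^'m) *v x)"
  using linear_conv_bounded_linear matrix_vector_mul_linear by blast

lemma opnorm_bound: "norm (A *v x) \<le> opnorm A * norm (x::complex^'n)"
  unfolding opnorm_def using onorm[OF mv_bl] by blast

lemma opnorm_le: "(\<And>x. norm ((A::complex^'n^'m) *v x) \<le> b * norm x) \<Longrightarrow> opnorm A \<le> b"
  unfolding opnorm_def by (rule onorm_le)

lemma opnorm_nonneg: "0 \<le> opnorm (A::complex^'n^'m)"
  unfolding opnorm_def using onorm_pos_le[OF mv_bl] by blast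

lemma norm_axis_c: "norm (axis i (1::complex)) = 1"
  by (simp add: norm_eq_sqrt_inner inner_axis_axis)

definition nbound :: "complex^'n^'n \<Rightarrow> real \<Rightarrow> bool" where
  "nbound X c \<longleftrightarrow> (\<forall>x. inner x (X *v x) \<le> c * (norm x)^2)"

lemma pert_mv: "(mat 1 + cscale (complex_of_real t) X) *v x = x + t *\<^sub>R (X *v (x::complex^'n))"
  by (simp add: matrix_vector_mult_add_rdistrib cscale_mv scaleR_is_s)

lemma pert_norm: "(norm ((mat 1 + cscale (complex_of_real t) X) *v x))^2
   = (norm x)^2 + 2 * t * inner x (X *v x) + t^2 * (norm (X *v (x::complex^'n)))^2"
  unfolding pert_mv power2_norm_eq_inner
  by (simp add: inner_add_left inner_add_right inner_commute[of "X *v x" x] power2_eq_square algebra_simps)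

lemma nbound_transfer:
  fixes X Y :: "complex^'n^'n"
  assumes eq: "\<And>t. t > 0 \<Longrightarrow> opnorm (mat 1 + cscale (complex_of_real t) Y) = opnorm (mat 1 + cscale (complex_of_real t) X)"
    and nb: "nbound X c"
  shows "nbound Y c"
  unfolding nbound_def
proof
  fix x :: "complex^'n"
  define K where "K = opnorm X"
  have step: "inner x (Y *v x) \<le> c * (norm x)^2 + t / 2 * (K^2 * (norm x)^2)" if t: "t > 0" for t
  proof -
    define q where "q = 1 + 2 * t * c + t^2 * K^2"
    have sq: "(norm ((mat 1 + cscale (complex_of_real t) X) *v y))^2 \<le> q * (norm y)^2" for y
    proof -
      have "inner y (X *v y) \<le> c * (norm y)^2" using nb unfolding nbound_def by blast
      moreover have "norm (X *v y) \<le> K * norm y" using opnorm_bound K_def by blast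
      then have "(norm (X *v y))^2 \<le> (K * norm y)^2" by (simp add: power_mono)
      ultimately have "2 * t * inner x' (X *v x') \<le> 2 * t * (c * (norm x')^2)" if "x' = y" for x'
        using t that by simp
      then have a: "2 * t * inner y (X *v y) \<le> 2 * t * (c * (norm y)^2)" by blast
      have b: "t^2 * (norm (X *v y))^2 \<le> t^2 * ((K * norm y)^2)"
        using \<open>(norm (X *v y))^2 \<le> (K * norm y)^2\<close> by (simp add: mult_left_mono)
      show ?thesis unfolding pert_norm q_def using a b by (simp add: algebra_simps power_mult_distrib)
    qed
    have q_nn: "q \<ge> 0"
    proof -
      obtain i :: 'n where True by blast
      have "(norm ((mat 1 + cscale (complex_of_real t) X) *v axis i 1))^2 \<le> q * (norm (axis i (1::complex)))^2"
        by (rule sq)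
      moreover have "norm (axis i (1::complex)) = 1" by (simp add: norm_axis_c)
      ultimately show ?thesis by (metis mult.right_neutral power_one zero_le_power2 order_trans)
    qed
    have "opnorm (mat 1 + cscale (complex_of_real t) X) \<le> sqrt q"
    proof (rule opnorm_le)
      fix y :: "complex^'n"
      have "norm ((mat 1 + cscale (complex_of_real t) X) *v y) = sqrt ((norm ((mat 1 + cscale (complex_of_real t) X) *v y))^2)"
        by simp
      also have "\<dots> \<le> sqrt (q * (norm y)^2)" using sq by (rule real_sqrt_le_mono)
      also have "\<dots> = sqrt q * norm y" by (simp add: real_sqrt_mult)
      finally show "norm ((mat 1 + cscale (complex_of_real t) X) *v y) \<le> sqrt q * norm y" .
    qed
    then have opY: "opnorm (mat 1 + cscale (complex_of_real t) Y) \<le> sqrt q" using eq[OF t] by simp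
    have "(norm x)^2 + 2 * t * inner x (Y *v x) \<le> (norm ((mat 1 + cscale (complex_of_real t) Y) *v x))^2"
      unfolding pert_norm by simp
    also have "\<dots> \<le> (opnorm (mat 1 + cscale (complex_of_real t) Y) * norm x)^2"
      by (rule power_mono[OF opnorm_bound]) simp
    also have "\<dots> \<le> (sqrt q * norm x)^2"
      using opY by (intro power_mono mult_right_mono) (auto simp: opnorm_nonneg)
    also have "\<dots> = q * (norm x)^2" using q_nn by (simp add: power_mult_distrib)
    finally have "(norm x)^2 + 2 * t * inner x (Y *v x) \<le> q * (norm x)^2" .
    then have "2 * t * inner x (Y *v x) \<le> 2 * t * (c * (norm x)^2 + t / 2 * (K^2 * (norm x)^2))"
      unfolding q_def by (simp add: algebra_simps power2_eq_square)
    then show ?thesis using t by simp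
  qed
  show "inner x (Y *v x) \<le> c * (norm x)^2"
  proof (rule ccontr)
    assume "\<not> ?thesis"
    then have dpos: "inner x (Y *v x) - c * (norm x)^2 > 0" by simp
    define d where "d = inner x (Y *v x) - c * (norm x)^2"
    define M where "M = K^2 * (norm x)^2"
    have M0: "M \<ge> 0" by (simp add: M_def)
    define t where "t = d / (M + 1)"
    have tpos: "t > 0" using dpos M0 by (simp add: t_def d_def)
    have "d \<le> t / 2 * M" using step[OF tpos] by (simp add: d_def M_def)
    also have "\<dots> < t * (M + 1)" using tpos M0 by (simp add: field_simps add_nonneg_pos)
    also have "\<dots> = d" using M0 by (simp add: t_def)
    finally show False by simp
  qed
qed

lemma nbound_attain:
  fixes X :: "complex^'n^'n"
  assumes nb1: "nbound X 1" and nlt: "\<And>c. c < 1 \<Longrightarrow> \<not> nbound X c"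
  shows "\<exists>x. norm x = 1 \<and> inner x (X *v x) = 1"
proof -
  let ?f = "\<lambda>x. inner x (X *v x)"
  have cont: "continuous_on (sphere 0 1) ?f"
    by (intro continuous_on_inner continuous_on_id linear_continuous_on[OF mv_bl])
  obtain i :: 'n where True by blast
  have "axis i (1::complex) \<in> sphere 0 1" by (simp add: norm_axis_c)
  then have ne: "sphere (0::complex^'n) 1 \<noteq> {}" by blast
  obtain x0 where x0: "x0 \<in> sphere 0 1" and mx: "\<forall>y\<in>sphere 0 1. ?f y \<le> ?f x0"
    using continuous_attains_sup[OF compact_sphere ne cont] by blast
  have nx0: "norm x0 = 1" using x0 by simp
  have "nbound X (?f x0)"
    unfolding nbound_def
  proof
    fix y :: "complex^'n"
    show "?f y \<le> ?f x0 * (norm y)^2"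
    proof (cases "y = 0")
      case True then show ?thesis by simp
    next
      case False
      define u where "u = (1 / norm y) *\<^sub>R y"
      have "u \<in> sphere 0 1" using False by (simp add: u_def)
      then have "?f u \<le> ?f x0" using mx by blast
      moreover have "?f y = (norm y)^2 * ?f u"
        using False by (simp add: u_def mv_scaleR power2_eq_square)
      ultimately show ?thesis by (metis mult.commute mult_right_mono zero_le_power2)
    qed
  qed
  then have "\<not> ?f x0 < 1" using nlt by blast
  moreover have "?f x0 \<le> 1" using nb1 nx0 unfolding nbound_def by (metis mult_1 power_one)
  ultimately show ?thesis using nx0 by auto
qed


section \<open>Roots of unity\<close>

definition om :: "nat \<Rightarrow> complex" where "om n = cis (2 * pi / real n)"

lemma om_norm[simp]: "norm (om n) = 1"
  by (simp add: om_def)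

lemma om_pow: "om n ^ k = cis (2 * pi * real k / real n)"
proof -
  have "om n ^ k = cis (real k * (2 * pi / real n))" by (simp only: om_def Complex.DeMoivre)
  also have "real k * (2 * pi / real n) = 2 * pi * real k / real n" by simp
  finally show ?thesis .
qed

lemma om_pow_n: "n > 0 \<Longrightarrow> om n ^ n = 1"
  by (simp add: om_pow)

lemma om_pow_mod: "n > 0 \<Longrightarrow> om n ^ m = om n ^ (m mod n)"
proof -
  assume n: "n > 0"
  have "om n ^ m = om n ^ (n * (m div n) + m mod n)" by simp
  also have "\<dots> = (om n ^ n) ^ (m div n) * om n ^ (m mod n)" by (simp only: power_add power_mult)
  also have "\<dots> = om n ^ (m mod n)" using om_pow_n[OF n] by simp
  finally show ?thesis .
qed

lemma om_pow_eq1: "n > 0 \<Longrightarrow> om n ^ m = 1 \<longleftrightarrow> n dvd m"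
proof
  assume n: "n > 0" and h: "om n ^ m = 1"
  have inj: "inj_on (\<lambda>k. cis (2 * pi * real k / real n)) {..<n}"
    using Complex.bij_betw_roots_unity[OF n] by (simp add: bij_betw_def)
  have "(\<lambda>k. cis (2 * pi * real k / real n)) (m mod n) = (\<lambda>k. cis (2 * pi * real k / real n)) 0"
    using h om_pow_mod[OF n, of m] by (simp add: om_pow)
  from inj_onD[OF inj this] have "m mod n = 0" using n by simp
  then show "n dvd m" by auto
next
  assume n: "n > 0" and "n dvd m"
  then obtain q where "m = n * q" by auto
  then show "om n ^ m = 1" using om_pow_n[OF n] by (simp add: power_mult)
qed

lemma root_sum: "n > 0 \<Longrightarrow> (\<Sum>k<n. om n ^ (k * m)) = (if n dvd m then of_nat n else 0)"
proof -
  assume n: "n > 0"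
  have e: "om n ^ (k * m) = (om n ^ m) ^ k" for k by (metis power_mult mult.commute)
  show ?thesis
  proof (cases "n dvd m")
    case True
    then have "om n ^ m = 1" using om_pow_eq1[OF n] by simp
    then show ?thesis using True by (simp add: e)
  next
    case False
    then have w: "om n ^ m \<noteq> 1" using om_pow_eq1[OF n] by simp
    have "(om n ^ m) ^ n = 1" using om_pow_n[OF n] by (metis power_mult mult.commute power_one)
    then show ?thesis using False geometric_sum[OF w, of n] by (simp add: e)
  qed
qed

lemma dvd_range: "0 < (m::nat) \<Longrightarrow> m < 2 * n \<Longrightarrow> (n dvd m) \<longleftrightarrow> m = n"
proof
  assume "0 < m" "m < 2 * n" "n dvd m"
  then obtain q where q: "m = n * q" by auto
  have "q \<noteq> 0" using q \<open>0 < m\<close> by auto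
  then have "q \<ge> 1" by simp
  moreover from q \<open>m < 2 * n\<close> have "q < 2" by (metis mult.commute mult_less_cancel2)
  ultimately show "m = n" using q by (cases "q = 1") auto
qed auto

lemma cnj_om_pow: "n > 0 \<Longrightarrow> d \<le> n \<Longrightarrow> cnj (om n ^ (k * d)) = om n ^ (k * (n - d))"
proof -
  assume n: "n > 0" and d: "d \<le> n"
  have "om n ^ (k * d) * om n ^ (k * (n - d)) = om n ^ (k * n)"
    using d by (simp add: power_add[symmetric] add_mult_distrib2[symmetric])
  also have "\<dots> = 1" using om_pow_n[OF n] by (metis power_mult power_one mult.commute)
  finally have p: "om n ^ (k * d) * om n ^ (k * (n - d)) = 1" .
  have "cnj (om n ^ (k * d)) * om n ^ (k * d) = 1"
    by (metis complex_norm_square mult.commute norm_power om_norm power_one of_real_1)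
  then show ?thesis using p
    by (metis mult.commute mult.left_neutral mult.assoc)
qed


section \<open>The test elements a_z\<close>

definition az :: "complex \<Rightarrow> complex^('n::{finite,linorder})^('n::{finite,linorder})" where
  "az z = cscale (1 / of_nat CARD('n::{finite,linorder})) (mat 1) + (\<Sum>d\<in>{1..<CARD('n::{finite,linorder})}. cscale (2 * z^d / of_nat CARD('n::{finite,linorder})) (shm d))"

definition vz :: "complex \<Rightarrow> complex^('n::{finite,linorder})" where
  "vz z = (\<chi> i. z ^ idx i)"

lemma az_LT: "az z \<in> lt_toeplitz"
  unfolding az_def by (intro LT_add LT_scale LT_1 LT_sum shm_LT) auto

lemma az_entry: "(az z :: complex^('n::{finite,linorder})^('n::{finite,linorder})) $ i $ j
   = (if i = j then 1 / of_nat CARD('n::{finite,linorder}) else if idx j < idx i then 2 * z^(idx i - idx j) / of_nat CARD('n::{finite,linorder}) else 0)"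
proof -
  have s: "(\<Sum>d\<in>{1..<CARD('n::{finite,linorder})}. 2 * z^d / of_nat CARD('n::{finite,linorder}) * (shm d :: complex^('n::{finite,linorder})^('n::{finite,linorder})) $ i $ j)
     = (\<Sum>d\<in>{1..<CARD('n::{finite,linorder})}. if d = idx i - idx j then (if idx j < idx i then 2 * z^d / of_nat CARD('n::{finite,linorder}) else 0) else 0)"
    by (intro sum.cong refl) (auto simp: shm_nth)
  also have "\<dots> = (if idx j < idx i then 2 * z^(idx i - idx j) / of_nat CARD('n::{finite,linorder}) else 0)"
    using idx_less[of i] by (simp add: sum.delta) linarith
  finally show ?thesis
    by (auto simp: az_def mat_def s idx_less_iff)
qed

lemma unit_pow_cnj: "norm z = 1 \<Longrightarrow> z ^ k * cnj z ^ k = 1"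
  by (metis complex_norm_square norm_power power_mult_distrib power_one of_real_1 mult.commute complex_cnj_power)

lemma unit_pow_diff: "norm z = 1 \<Longrightarrow> b \<le> a \<Longrightarrow> z ^ a * cnj z ^ b = z ^ (a - b)"
proof -
  assume z: "norm z = 1" and ba: "b \<le> a"
  have "z ^ a * cnj z ^ b = z ^ (a - b) * (z ^ b * cnj z ^ b)"
    using ba by (simp add: power_add[symmetric] mult.assoc)
  then show ?thesis using unit_pow_cnj[OF z] by simp
qed

lemma ci_cs: "cmod (ci v x) \<le> norm v * norm (x::complex^('n::{finite,linorder}))"
proof -
  define c where "c = ci v x"
  have "complex_of_real ((cmod c)^2) = ci v (cnj c *s x)"
    unfolding ci_scale_right c_def complex_norm_square by (simp add: mult.commute)
  then have "(cmod c)^2 = inner v (cnj c *s x)"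
    by (metis Re_ci Re_complex_of_real)
  also have "\<dots> \<le> norm v * norm (cnj c *s x)" by (rule norm_cauchy_schwarz)
  also have "\<dots> = cmod c * (norm v * norm x)" by (simp add: norm_s)
  finally have h: "(cmod c)^2 \<le> cmod c * (norm v * norm x)" .
  show ?thesis
  proof (cases "cmod c = 0")
    case True then show ?thesis unfolding c_def[symmetric] by simp
  next
    case False
    then have "cmod c > 0" by simp
    with h show ?thesis unfolding c_def[symmetric] by (simp add: power2_eq_square)
  qed
qed

lemma vz_norm: "norm z = 1 \<Longrightarrow> (norm (vz z :: complex^('n::{finite,linorder})))^2 = real CARD('n::{finite,linorder})"
proof -
  assume z: "norm z = 1"
  have "complex_of_real ((norm (vz z :: complex^('n::{finite,linorder})))^2) = ci (vz z :: complex^('n::{finite,linorder})) (vz z)" by (simp add: ci_self)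
  also have "\<dots> = (\<Sum>i\<in>(UNIV::('n::{finite,linorder}) set). 1)"
    unfolding ci_def vz_def using unit_pow_cnj[OF z] by (simp add: mult.commute)
  finally have "complex_of_real ((norm (vz z :: complex^('n::{finite,linorder})))^2) = complex_of_real (real CARD('n::{finite,linorder}))" by simp
  then show ?thesis using of_real_eq_iff by blast
qed

lemma neg_mv: "(- A) *v x = - (A *v (x::complex^('n::{finite,linorder})))"
  by (simp add: matrix_vector_mult_def vec_eq_iff sum_negf)

lemma az_quad:
  assumes z: "norm z = 1"
  shows "inner x ((az z :: complex^('n::{finite,linorder})^('n::{finite,linorder})) *v x) = (cmod (ci (vz z) x))^2 / real CARD('n::{finite,linorder})"
proof -
  let ?N = "of_nat CARD('n::{finite,linorder}) :: complex"
  have Npos: "CARD('n::{finite,linorder}) > 0" by simp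
  define g where "g i j = cnj (x$i) * x$j * (z ^ idx i * cnj z ^ idx j)" for i j :: "'n::{finite,linorder}"
  define A where "A = (\<Sum>i\<in>UNIV. \<Sum>j\<in>UNIV. if idx j < idx i then g i j else 0)"
  have gsym: "cnj (g i j) = g j i" for i j by (simp add: g_def mult_ac)
  have pt: "cnj (x$i) * ((az z :: complex^('n::{finite,linorder})^('n::{finite,linorder})) $ i $ j * x$j)
      = (g i j + (if idx j < idx i then g i j else 0) - (if idx i < idx j then g i j else 0)) / ?N" for i j
  proof -
    consider "i = j" | "idx j < idx i" | "idx i < idx j" by (metis idx_eq_iff linorder_neqE_nat)
    then show ?thesis
    proof cases
      case 1 then show ?thesis using unit_pow_cnj[OF z] by (simp add: az_entry g_def)
    next
      case 2
      then have "i \<noteq> j" by auto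
      moreover have "z ^ idx i * cnj z ^ idx j = z ^ (idx i - idx j)" using 2 unit_pow_diff[OF z] by simp
      ultimately show ?thesis using 2 by (simp add: az_entry g_def field_simps)
    next
      case 3
      then have "i \<noteq> j" "\<not> idx j < idx i" by auto
      then show ?thesis using 3 by (simp add: az_entry)
    qed
  qed
  have "ci x ((az z :: complex^('n::{finite,linorder})^('n::{finite,linorder})) *v x) = (\<Sum>i\<in>UNIV. \<Sum>j\<in>UNIV. cnj (x$i) * ((az z :: complex^('n::{finite,linorder})^('n::{finite,linorder})) $ i $ j * x$j))"
    by (simp add: ci_def matrix_vector_mult_def sum_distrib_left)
  also have "\<dots> = (\<Sum>i\<in>UNIV. \<Sum>j\<in>UNIV. (g i j + (if idx j < idx i then g i j else 0) - (if idx i < idx j then g i j else 0)) / ?N)"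
    by (simp add: pt)
  also have "\<dots> = ((\<Sum>i\<in>UNIV. \<Sum>j\<in>UNIV. g i j) + A - (\<Sum>i\<in>UNIV. \<Sum>j\<in>UNIV. if idx i < idx j then g i j else 0)) / ?N"
    by (simp add: A_def sum_divide_distrib[symmetric] sum.distrib sum_subtractf)
  also have "(\<Sum>i\<in>UNIV. \<Sum>j\<in>UNIV. if idx i < idx j then g i j else 0) = cnj A"
  proof -
    have "(\<Sum>i\<in>UNIV. \<Sum>j\<in>UNIV. if idx i < idx j then g i j else 0) = (\<Sum>j\<in>UNIV. \<Sum>i\<in>UNIV. if idx i < idx j then g i j else 0)"
      by (rule sum.swap)
    also have "\<dots> = (\<Sum>j\<in>UNIV. \<Sum>i\<in>UNIV. cnj (if idx i < idx j then g j i else 0))"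
      by (intro sum.cong refl) (simp add: gsym split: if_split)
    also have "\<dots> = cnj A" by (simp only: A_def cnj_sum)
    finally show ?thesis .
  qed
  finally have e1: "ci x ((az z :: complex^('n::{finite,linorder})^('n::{finite,linorder})) *v x) = ((\<Sum>i\<in>UNIV. \<Sum>j\<in>UNIV. g i j) + A - cnj A) / ?N" .
  have e2: "(\<Sum>i\<in>UNIV. \<Sum>j\<in>UNIV. g i j) = cnj (ci (vz z) x) * ci (vz z) x"
    by (simp add: g_def ci_def vz_def sum_product mult_ac) (rule sum.swap)
  have "Re (A - cnj A) = 0" by simp
  then have "Re (ci x ((az z :: complex^('n::{finite,linorder})^('n::{finite,linorder})) *v x)) = Re (cnj (ci (vz z) x) * ci (vz z) x) / real CARD('n::{finite,linorder})"
    unfolding e1 e2 by (simp add: Re_divide_of_nat)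
  also have "Re (cnj (ci (vz z) x) * ci (vz z) x) = (cmod (ci (vz z) x))^2"
    by (metis Re_complex_of_real complex_norm_square mult.commute)
  finally show ?thesis by (simp add: Re_ci)
qed

lemma az_nb1: "norm z = 1 \<Longrightarrow> nbound (az z :: complex^('n::{finite,linorder})^('n::{finite,linorder})) 1"
  unfolding nbound_def
proof
  fix x :: "complex^('n::{finite,linorder})"
  assume z: "norm z = 1"
  have "(cmod (ci (vz z) x))^2 \<le> (norm (vz z :: complex^('n::{finite,linorder})) * norm x)^2"
    by (intro power_mono ci_cs) simp
  also have "\<dots> = real CARD('n::{finite,linorder}) * (norm x)^2" using vz_norm[OF z, where 'n='n] by (simp add: power_mult_distrib)
  finally have h: "(cmod (ci (vz z) x))^2 \<le> real CARD('n::{finite,linorder}) * (norm x)^2" .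
  have "real CARD('n::{finite,linorder}) * inner x (az z *v x) = (cmod (ci (vz z) x))^2"
    using az_quad[OF z, of x] by (simp add: field_simps)
  then have "real CARD('n::{finite,linorder}) * inner x (az z *v x) \<le> real CARD('n::{finite,linorder}) * (norm x)^2"
    using h by simp
  then show "inner x (az z *v x) \<le> 1 * (norm x)^2"
    by (simp add: mult_le_cancel_left_pos)
qed

lemma az_nb0: "norm z = 1 \<Longrightarrow> nbound (- az z :: complex^('n::{finite,linorder})^('n::{finite,linorder})) 0"
  unfolding nbound_def by (simp add: neg_mv az_quad)

lemma az_nlt: "norm z = 1 \<Longrightarrow> c < 1 \<Longrightarrow> \<not> nbound (az z :: complex^('n::{finite,linorder})^('n::{finite,linorder})) c"
proof
  assume z: "norm z = 1" and c: "c < 1" and nb: "nbound (az z :: complex^('n::{finite,linorder})^('n::{finite,linorder})) c"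
  let ?v = "vz z :: complex^('n::{finite,linorder})"
  have nv: "(norm ?v)^2 = real CARD('n::{finite,linorder})" using vz_norm[OF z] .
  have "ci ?v ?v = of_real (real CARD('n::{finite,linorder}))" using nv by (simp add: ci_self)
  then have "inner ?v (az z *v ?v) = real CARD('n::{finite,linorder})"
    using az_quad[OF z, of ?v] by (simp add: power2_eq_square)
  moreover have "inner ?v (az z *v ?v) \<le> c * real CARD('n::{finite,linorder})" using nb nv unfolding nbound_def by metis
  ultimately show False using c by simp
qed



lemma cs_sum_swap: "(\<Sum>k\<in>K. cscale (c k) (\<Sum>d\<in>D. cscale (f k d) (M d)))
   = (\<Sum>d\<in>D. cscale (\<Sum>k\<in>K. c k * f k d) (M d :: complex^'n^'m))"
proof -
  have "\<And>i j. (\<Sum>k\<in>K. c k * (\<Sum>d\<in>D. f k d * M d $ i $ j)) = (\<Sum>d\<in>D. (\<Sum>k\<in>K. c k * f k d) * M d $ i $ j)"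
    by (simp add: sum_distrib_left sum_distrib_right mult.assoc) (rule sum.swap)
  then show ?thesis by (simp add: vec_eq_iff)
qed

lemma cs_sum_add: "(\<Sum>k\<in>K. cscale (c k) (A k + B k)) = (\<Sum>k\<in>K. cscale (c k) (A k)) + (\<Sum>k\<in>K. cscale (c k) (B k :: complex^'n^'m))"
  by (simp add: cscale_add sum.distrib)

lemma cs_sum_const: "(\<Sum>k\<in>K. cscale (c k) (cscale a M)) = cscale ((\<Sum>k\<in>K. c k) * a) (M :: complex^'n^'m)"
  by (simp add: cscale_mult cscale_sum_left sum_distrib_right)

lemma az_sum:
  "(\<Sum>k<CARD('n::{finite,linorder}). cscale (c k) (az (\<zeta> * om CARD('n::{finite,linorder}) ^ k) :: complex^('n::{finite,linorder})^('n::{finite,linorder})))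
   = cscale ((\<Sum>k<CARD('n::{finite,linorder}). c k) / of_nat CARD('n::{finite,linorder})) (mat 1)
     + (\<Sum>d\<in>{1..<CARD('n::{finite,linorder})}. cscale (2 / of_nat CARD('n::{finite,linorder}) * (\<Sum>k<CARD('n::{finite,linorder}). c k * (\<zeta> * om CARD('n::{finite,linorder}) ^ k)^d)) (shm d))"
  unfolding az_def cs_sum_add cs_sum_const cs_sum_swap
proof -
  let ?N = "of_nat CARD('n::{finite,linorder}) :: complex"
  let ?w = "om CARD('n::{finite,linorder})"
  have "(\<Sum>k<CARD('n). c k * (2 * (\<zeta> * ?w ^ k) ^ d / ?N)) = 2 / ?N * (\<Sum>k<CARD('n). c k * (\<zeta> * ?w ^ k) ^ d)" for d
    by (simp add: sum_distrib_left mult_ac)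
  then show "cscale ((\<Sum>k<CARD('n). c k) * (1 / ?N)) (mat 1) +
    (\<Sum>d\<in>{1..<CARD('n)}. cscale (\<Sum>k<CARD('n). c k * (2 * (\<zeta> * ?w ^ k) ^ d / ?N)) (shm d)) =
    cscale ((\<Sum>k<CARD('n). c k) / ?N) (mat 1) +
    (\<Sum>d\<in>{1..<CARD('n)}. cscale (2 / ?N * (\<Sum>k<CARD('n). c k * (\<zeta> * ?w ^ k) ^ d)) (shm d :: complex^('n::{finite,linorder})^('n::{finite,linorder})))"
    by simp
qed


lemma SA:
  assumes e: "e < CARD('n::{finite,linorder})"
  shows "(\<Sum>k<CARD('n::{finite,linorder}). cscale (om CARD('n::{finite,linorder}) ^ (k * e)) (az (\<zeta> * om CARD('n::{finite,linorder}) ^ k) :: complex^('n::{finite,linorder})^('n::{finite,linorder})))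
   = (if e = 0 then mat 1 else cscale (2 * \<zeta> ^ (CARD('n::{finite,linorder}) - e)) (shm (CARD('n::{finite,linorder}) - e)))"
proof -
  let ?n = "CARD('n::{finite,linorder})"
  let ?N = "of_nat ?n :: complex"
  let ?w = "om ?n"
  have n: "?n > 0" by simp
  have c0: "(\<Sum>k<?n. ?w ^ (k * e)) / ?N = (if e = 0 then 1 else 0)"
  proof -
    have "?n dvd e \<longleftrightarrow> e = 0" using e by (auto dest: dvd_imp_le)
    then show ?thesis using root_sum[OF n, of e] by simp
  qed
  have cd: "2 / ?N * (\<Sum>k<?n. ?w ^ (k * e) * (\<zeta> * ?w ^ k) ^ d) = (if d = ?n - e then 2 * \<zeta> ^ d else 0)"
    if d: "d \<in> {1..<?n}" for d
  proof -
    have "(\<Sum>k<?n. ?w ^ (k * e) * (\<zeta> * ?w ^ k) ^ d) = \<zeta> ^ d * (\<Sum>k<?n. ?w ^ (k * (e + d)))"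
      by (simp add: sum_distrib_left power_mult_distrib power_mult[symmetric] power_add[symmetric] add_mult_distrib2 mult_ac add.commute)
    also have "(\<Sum>k<?n. ?w ^ (k * (e + d))) = (if e + d = ?n then ?N else 0)"
    proof -
      have "?n dvd (e + d) \<longleftrightarrow> e + d = ?n" using d e by (intro dvd_range) auto
      then show ?thesis using root_sum[OF n, of "e + d"] by simp
    qed
    finally show ?thesis using d e by auto
  qed
  have "(\<Sum>k<?n. cscale (?w ^ (k * e)) (az (\<zeta> * ?w ^ k) :: complex^('n::{finite,linorder})^('n::{finite,linorder})))
     = cscale (if e = 0 then 1 else 0) (mat 1) + (\<Sum>d\<in>{1..<?n}. if d = ?n - e then cscale (2 * \<zeta> ^ d) (shm d) else 0)"
    unfolding az_sum c0
  proof (intro arg_cong2[where f="(+)"] refl sum.cong)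
    fix d assume d: "d \<in> {1..<?n}"
    show "cscale (2 / ?N * (\<Sum>k<?n. ?w ^ (k * e) * (\<zeta> * ?w ^ k) ^ d)) (shm d :: complex^('n::{finite,linorder})^('n::{finite,linorder}))
        = (if d = ?n - e then cscale (2 * \<zeta> ^ d) (shm d) else 0)"
      unfolding cd[OF d] by simp
  qed
  also have "\<dots> = (if e = 0 then mat 1 else cscale (2 * \<zeta> ^ (?n - e)) (shm (?n - e)))"
    using e by (simp add: sum.delta)
  finally show ?thesis .
qed


definition hp :: "complex^'n^'n \<Rightarrow> complex^'n^'n" where
  "hp X = cscale (1/2) (X + cadj X)"

lemma hp_herm: "herm (hp X)"
  by (simp add: herm_def hp_def cadj_cscale cadj_add add.commute)

lemma half_s: "(1/2 :: complex) *s v = (1/2 :: real) *\<^sub>R (v :: complex^'n)"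
  by (simp add: scaleR_is_s)

lemma hp_inner: "inner x (hp X *v x) = inner x (X *v (x :: complex^'n))"
proof -
  have "hp X *v x = (1/2 :: real) *\<^sub>R (X *v x + cadj X *v x)"
    by (simp add: hp_def cscale_mv matrix_vector_mult_add_rdistrib half_s scaleR_right_distrib)
  then show ?thesis by (simp add: inner_add_right inner_cadj)
qed

lemma hp_nbound: "nbound (hp X) c \<longleftrightarrow> nbound X c"
  by (simp add: nbound_def hp_inner)

lemma cscale_cancel: "c \<noteq> 0 \<Longrightarrow> cscale c X = cscale c Y \<Longrightarrow> X = (Y :: complex^'a^'b)"
  by (simp add: cscale_def vec_eq_iff)

lemma expand2: "(A + cscale b C) ** (D + cscale b E)
   = A ** D + cscale b (A ** E + C ** D) + cscale (b^2) (C ** (E :: complex^'a^'a))"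
  by (simp add: matrix_add_ldistrib mm_add_right cscale_mm_left cscale_mm_right cscale_mult cscale_add power2_eq_square add_ac)

lemma quad3:
  assumes h: "\<And>\<beta>. \<beta> \<in> {1, -1, -\<i>} \<Longrightarrow> M0 + cscale \<beta> M1 + cscale (\<beta>^2) M2 = N0 + cscale \<beta> (N1 :: complex^'a^'b)"
  shows "M0 = N0 \<and> M1 = N1"
proof -
  have e: "M0 $ i $ j = N0 $ i $ j \<and> M1 $ i $ j = N1 $ i $ j" for i j
  proof -
    define x where "x = M0 $ i $ j - N0 $ i $ j"
    define y where "y = M1 $ i $ j - N1 $ i $ j"
    define w where "w = M2 $ i $ j"
    have "\<forall>\<beta>\<in>{1, -1, -\<i>}. x + \<beta> * y + \<beta>^2 * w = 0"
    proof
      fix \<beta> :: complex assume b: "\<beta> \<in> {1, -1, -\<i>}"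
      have "(M0 + cscale \<beta> M1 + cscale (\<beta>^2) M2) $ i $ j = (N0 + cscale \<beta> N1) $ i $ j" using h[OF b] by simp
      then show "x + \<beta> * y + \<beta>^2 * w = 0" by (simp add: x_def y_def w_def algebra_simps)
    qed
    then have e1: "x + y + w = 0" and e2: "x - y + w = 0" and e3: "x - \<i> * y - w = 0"
      by (auto simp: power2_eq_square)
    have "2 * y = (x + y + w) - (x - y + w)" by (simp add: algebra_simps)
    then have "2 * y = 0" using e1 e2 by simp
    then have y0: "y = 0" by simp
    have "2 * x = (x + y + w) + (x - \<i> * y - w)" using y0 by (simp add: algebra_simps)
    then have "2 * x = 0" using e1 e3 by simp
    then have "x = 0" by simp
    with y0 have "x = 0" "y = 0" by auto
    then show ?thesis by (simp add: x_def y_def)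
  qed
  then show ?thesis by (simp add: vec_eq_iff)
qed

locale iso =
  fixes f :: "complex^('n::{finite,linorder})^('n::{finite,linorder}) \<Rightarrow> complex^('n::{finite,linorder})^('n::{finite,linorder})"
  assumes additive: "\<And>a b. a \<in> lt_toeplitz \<Longrightarrow> b \<in> lt_toeplitz \<Longrightarrow> f (a + b) = f a + f b"
    and homogeneous: "\<And>c a. a \<in> lt_toeplitz \<Longrightarrow> f (cscale c a) = cscale c (f a)"
    and unital: "f (mat 1) = mat 1"
    and isometry: "\<And>a. a \<in> lt_toeplitz \<Longrightarrow> opnorm (f a) = opnorm a"
begin

lemma phi_0: "f 0 = 0"
  using homogeneous[OF LT_0, of 0] by simp

lemma phi_sum: "finite D \<Longrightarrow> (\<And>d. d \<in> D \<Longrightarrow> g d \<in> lt_toeplitz) \<Longrightarrow> f (sum g D) = (\<Sum>d\<in>D. f (g d))"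
proof (induction D rule: finite_induct)
  case empty then show ?case by (simp add: phi_0)
next
  case (insert x F)
  then have "sum g F \<in> lt_toeplitz" by (intro LT_sum) auto
  then show ?case using insert by (simp add: additive)
qed

lemma phi_neg: "a \<in> lt_toeplitz \<Longrightarrow> f (- a) = - f a"
  using homogeneous[of a "-1"] by (simp add: cscale_minus)

lemma phi_affine: "a \<in> lt_toeplitz \<Longrightarrow> f (mat 1 + cscale c a) = mat 1 + cscale c (f a)"
  using additive[OF LT_1 LT_scale] homogeneous unital by simp

lemma nb_iff: "a \<in> lt_toeplitz \<Longrightarrow> nbound (f a) c \<longleftrightarrow> nbound a c"
proof -
  assume a: "a \<in> lt_toeplitz"
  have eq: "opnorm (mat 1 + cscale (complex_of_real t) (f a)) = opnorm (mat 1 + cscale (complex_of_real t) a)" for t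
  proof -
    have "mat 1 + cscale (complex_of_real t) a \<in> lt_toeplitz" using a by (intro LT_add LT_1 LT_scale)
    then show ?thesis using isometry phi_affine[OF a] by metis
  qed
  show ?thesis
  proof
    assume h: "nbound (f a) c" show "nbound a c" by (rule nbound_transfer[of a "f a" c]) (auto simp: eq h)
  next
    assume h: "nbound a c" show "nbound (f a) c" by (rule nbound_transfer[of "f a" a c]) (auto simp: eq h)
  qed
qed

definition T :: "nat \<Rightarrow> complex^('n::{finite,linorder})^('n::{finite,linorder})" where
  "T d = f (shm d)"

definition Pz :: "complex \<Rightarrow> complex^('n::{finite,linorder})^('n::{finite,linorder})" where
  "Pz z = hp (f (az z))"

lemma Pz_herm: "herm (Pz z)"
  by (simp add: Pz_def hp_herm)

lemma Pz_psd: "norm z = 1 \<Longrightarrow> 0 \<le> inner x (Pz z *v x)"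
proof -
  assume z: "norm z = 1"
  have "nbound (f (- az z)) 0" using nb_iff[of "- az z" 0] az_nb0[OF z] az_LT
    by (metis LT_scale cscale_minus)
  then have "nbound (- f (az z)) 0" using phi_neg[OF az_LT] by simp
  then have "inner x (- f (az z) *v x) \<le> 0" unfolding nbound_def by (metis mult_zero_left)
  then show ?thesis by (simp add: Pz_def hp_inner neg_mv)
qed

lemma Pz_le1: "norm z = 1 \<Longrightarrow> inner x (Pz z *v x) \<le> (norm x)^2"
proof -
  assume z: "norm z = 1"
  have "nbound (Pz z) 1" using nb_iff[OF az_LT] az_nb1[OF z] by (simp add: Pz_def hp_nbound)
  then show ?thesis unfolding nbound_def by simp
qed

lemma Pz_att: "norm z = 1 \<Longrightarrow> \<exists>x. norm x = 1 \<and> inner x (Pz z *v x) = 1"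
proof (rule nbound_attain)
  assume z: "norm z = 1"
  show "nbound (Pz z) 1" using nb_iff[OF az_LT] az_nb1[OF z] by (simp add: Pz_def hp_nbound)
  show "\<not> nbound (Pz z) c" if "c < 1" for c
    using nb_iff[OF az_LT] az_nlt[OF z that] by (simp add: Pz_def hp_nbound)
qed


lemma Pz_sum:
  "(\<Sum>k<CARD('n). cscale (c k) (Pz (\<zeta> * om CARD('n) ^ k)))
   = cscale (1/2) (f (\<Sum>k<CARD('n). cscale (c k) (az (\<zeta> * om CARD('n) ^ k)))
       + cadj (f (\<Sum>k<CARD('n). cscale (cnj (c k)) (az (\<zeta> * om CARD('n) ^ k)))))"
proof -
  let ?F = "\<lambda>k. f (az (\<zeta> * om CARD('n) ^ k))"
  have s1: "f (\<Sum>k<CARD('n). cscale (c' k) (az (\<zeta> * om CARD('n) ^ k))) = (\<Sum>k<CARD('n). cscale (c' k) (?F k))" for c'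
    by (simp add: phi_sum LT_scale az_LT homogeneous)
  have "(\<Sum>k<CARD('n). cscale (c k) (Pz (\<zeta> * om CARD('n) ^ k)))
      = (\<Sum>k<CARD('n). cscale (1/2) (cscale (c k) (?F k)) + cscale (1/2) (cscale (c k) (cadj (?F k))))"
    by (intro sum.cong refl) (simp add: Pz_def hp_def cscale_add cscale_mult mult.commute)
  also have "\<dots> = cscale (1/2) ((\<Sum>k<CARD('n). cscale (c k) (?F k)) + (\<Sum>k<CARD('n). cscale (c k) (cadj (?F k))))"
    by (simp add: cscale_add cscale_sum sum.distrib)
  also have "(\<Sum>k<CARD('n). cscale (c k) (cadj (?F k))) = cadj (\<Sum>k<CARD('n). cscale (cnj (c k)) (?F k))"
    by (simp add: cadj_sum cadj_cscale)
  finally show ?thesis by (simp only: s1)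
qed

definition Bm :: "complex \<Rightarrow> nat \<Rightarrow> complex^('n::{finite,linorder})^('n::{finite,linorder})" where
  "Bm \<zeta> e = (\<Sum>k<CARD('n). cscale (om CARD('n) ^ (k * e)) (Pz (\<zeta> * om CARD('n) ^ k)))"

lemma Bm_0: "Bm \<zeta> 0 = mat 1"
proof -
  have sa: "(\<Sum>k<CARD('n). cscale 1 (az (\<zeta> * om CARD('n) ^ k)) :: complex^('n::{finite,linorder})^('n::{finite,linorder})) = mat 1"
    using SA[of 0 \<zeta>] by simp
  have h: "cscale (1/2) (X + X) = X" for X :: "complex^('n::{finite,linorder})^('n::{finite,linorder})"
    by (simp add: cscale_def vec_eq_iff)
  show ?thesis unfolding Bm_def Pz_sum
    by (simp only: mult_0_right power_0 complex_cnj_one sa unital cadj_mat h)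
qed

lemma Bm_e:
  assumes e1: "1 \<le> e" and en: "e < CARD('n)"
  shows "Bm \<zeta> e = cscale (\<zeta> ^ (CARD('n) - e)) (T (CARD('n) - e)) + cscale (cnj \<zeta> ^ e) (cadj (T e))"
proof -
  let ?n = "CARD('n)"
  have n: "?n > 0" by simp
  have cj: "cnj (om ?n ^ (k * e)) = om ?n ^ (k * (?n - e))" for k
    using cnj_om_pow[OF n] en by simp
  have sa1: "(\<Sum>k<?n. cscale (om ?n ^ (k * e)) (az (\<zeta> * om ?n ^ k)) :: complex^('n::{finite,linorder})^('n::{finite,linorder}))
      = cscale (2 * \<zeta> ^ (?n - e)) (shm (?n - e))"
    using SA[OF en, of \<zeta>] e1 by simp
  have sa2: "(\<Sum>k<?n. cscale (om ?n ^ (k * (?n - e))) (az (\<zeta> * om ?n ^ k)) :: complex^('n::{finite,linorder})^('n::{finite,linorder}))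
      = cscale (2 * \<zeta> ^ e) (shm e)"
  proof -
    have "?n - e < ?n" using e1 en by simp
    from SA[OF this, of \<zeta>] show ?thesis using e1 en by simp
  qed
  show ?thesis
    unfolding Bm_def Pz_sum cj sa1 sa2
    by (simp add: homogeneous shm_LT T_def[symmetric] cadj_cscale cscale_add cscale_mult)
qed

lemma unit_rot: "norm \<zeta> = 1 \<Longrightarrow> norm (\<zeta> * om n ^ k) = 1"
  by (simp add: norm_mult norm_power)

lemma Pz_orth:
  assumes z: "norm \<zeta> = 1"
  shows "\<forall>k<CARD('n). \<forall>l<CARD('n). Pz (\<zeta> * om CARD('n) ^ k) ** Pz (\<zeta> * om CARD('n) ^ l)
      = (if k = l then Pz (\<zeta> * om CARD('n) ^ k) else 0)"
proof (rule rank1)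
  show "\<forall>k<CARD('n). herm (Pz (\<zeta> * om CARD('n) ^ k))" by (simp add: Pz_herm)
  show "\<forall>k<CARD('n). \<forall>x. 0 \<le> inner x (Pz (\<zeta> * om CARD('n) ^ k) *v x)"
    using Pz_psd unit_rot[OF z] by blast
  show "\<forall>k<CARD('n). \<forall>x. inner x (Pz (\<zeta> * om CARD('n) ^ k) *v x) \<le> (norm x)^2"
    using Pz_le1 unit_rot[OF z] by blast
  show "\<forall>k<CARD('n). \<exists>x. norm x = 1 \<and> inner x (Pz (\<zeta> * om CARD('n) ^ k) *v x) = 1"
    using Pz_att unit_rot[OF z] by blast
  show "(\<Sum>k<CARD('n). Pz (\<zeta> * om CARD('n) ^ k)) = mat 1"
    using Bm_0[of \<zeta>] by (simp add: Bm_def)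
qed

lemma Bm_mult:
  assumes z: "norm \<zeta> = 1"
  shows "Bm \<zeta> e ** Bm \<zeta> g = Bm \<zeta> ((e + g) mod CARD('n))"
proof -
  let ?n = "CARD('n)"
  let ?P = "\<lambda>k. Pz (\<zeta> * om ?n ^ k)"
  have n: "?n > 0" by simp
  have orth: "\<And>k l. k < ?n \<Longrightarrow> l < ?n \<Longrightarrow> ?P k ** ?P l = (if k = l then ?P k else 0)"
    using Pz_orth[OF z] by blast
  have "Bm \<zeta> e ** Bm \<zeta> g = (\<Sum>l<?n. \<Sum>k<?n. cscale (om ?n ^ (k * e) * om ?n ^ (l * g)) (?P k ** ?P l))"
    unfolding Bm_def by (simp add: mm_sum_left mm_sum_right cscale_mm_left cscale_mm_right cscale_mult cscale_sum mult.commute)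
  also have "\<dots> = (\<Sum>k<?n. \<Sum>l<?n. cscale (om ?n ^ (k * e) * om ?n ^ (l * g)) (?P k ** ?P l))"
    by (rule sum.swap)
  also have "\<dots> = (\<Sum>k<?n. \<Sum>l<?n. if l = k then cscale (om ?n ^ (k * e) * om ?n ^ (k * g)) (?P k) else 0)"
    by (intro sum.cong refl) (auto simp: orth)
  also have "\<dots> = (\<Sum>k<?n. cscale (om ?n ^ (k * e) * om ?n ^ (k * g)) (?P k))"
    by (simp add: sum.delta)
  also have "\<dots> = (\<Sum>k<?n. cscale (om ?n ^ (k * ((e + g) mod ?n))) (?P k))"
  proof (intro sum.cong refl)
    fix k
    have "om ?n ^ (k * e) * om ?n ^ (k * g) = om ?n ^ (k * (e + g))"
      by (simp add: power_add[symmetric] add_mult_distrib2)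
    also have "\<dots> = om ?n ^ ((k * (e + g)) mod ?n)" by (rule om_pow_mod[OF n])
    also have "(k * (e + g)) mod ?n = (k * ((e + g) mod ?n)) mod ?n" by (simp add: mod_mult_right_eq)
    also have "om ?n ^ \<dots> = om ?n ^ (k * ((e + g) mod ?n))" by (rule om_pow_mod[OF n, symmetric])
    finally show "cscale (om ?n ^ (k * e) * om ?n ^ (k * g)) (?P k) = cscale (om ?n ^ (k * ((e + g) mod ?n))) (?P k)"
      by simp
  qed
  finally show ?thesis by (simp add: Bm_def)
qed


definition R :: "complex \<Rightarrow> nat \<Rightarrow> complex^('n::{finite,linorder})^('n::{finite,linorder})" where
  "R \<beta> r = T r + cscale \<beta> (cadj (T (CARD('n) - r)))"

lemma Bm_R:
  assumes z: "norm \<zeta> = 1" and e1: "1 \<le> e" and en: "e < CARD('n)"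
  shows "Bm \<zeta> e = cscale (\<zeta> ^ (CARD('n) - e)) (R (cnj (\<zeta> ^ CARD('n))) (CARD('n) - e))"
proof -
  let ?n = "CARD('n)"
  have "\<zeta> ^ (?n - e) * cnj (\<zeta> ^ ?n) = cnj \<zeta> ^ e"
  proof -
    have "cnj (\<zeta> ^ ?n) = cnj \<zeta> ^ (?n - e) * cnj \<zeta> ^ e"
      using en by (simp add: power_add[symmetric])
    then show ?thesis using unit_pow_cnj[OF z, of "?n - e"] by (simp add: mult.assoc[symmetric])
  qed
  moreover have "?n - (?n - e) = e" using en by simp
  ultimately show ?thesis
    unfolding Bm_e[OF e1 en] R_def by (simp add: cscale_add cscale_mult)
qed

lemma rels:
  assumes z: "norm \<zeta> = 1" and n2: "2 \<le> CARD('n)"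
  shows "(\<forall>m. 2 \<le> m \<and> m \<le> CARD('n) - 1 \<longrightarrow> R (cnj (\<zeta> ^ CARD('n))) 1 ** R (cnj (\<zeta> ^ CARD('n))) (m - 1) = R (cnj (\<zeta> ^ CARD('n))) m)
     \<and> R (cnj (\<zeta> ^ CARD('n))) (CARD('n) - 1) ** R (cnj (\<zeta> ^ CARD('n))) 1 = cscale (cnj (\<zeta> ^ CARD('n))) (mat 1)"
proof
  let ?n = "CARD('n)"
  let ?b = "cnj (\<zeta> ^ ?n)"
  have z0: "\<zeta> \<noteq> 0" using z by auto
  show "\<forall>m. 2 \<le> m \<and> m \<le> ?n - 1 \<longrightarrow> R ?b 1 ** R ?b (m - 1) = R ?b m"
  proof (intro allI impI)
    fix m assume m: "2 \<le> m \<and> m \<le> ?n - 1"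
    have a: "Bm \<zeta> (?n - 1) = cscale \<zeta> (R ?b 1)"
      using Bm_R[OF z, of "?n - 1"] n2 by simp
    have b: "Bm \<zeta> (?n - (m - 1)) = cscale (\<zeta> ^ (m - 1)) (R ?b (m - 1))"
    proof -
      have i1: "1 \<le> ?n - (m - 1)" "?n - (m - 1) < ?n" using m n2 by auto
      have i2: "?n - (?n - (m - 1)) = m - 1" using m n2 by auto
      show ?thesis using Bm_R[OF z i1] unfolding i2 .
    qed
    have c: "Bm \<zeta> (?n - m) = cscale (\<zeta> ^ m) (R ?b m)"
    proof -
      have i1: "1 \<le> ?n - m" "?n - m < ?n" using m n2 by auto
      have i2: "?n - (?n - m) = m" using m n2 by auto
      show ?thesis using Bm_R[OF z i1] unfolding i2 .
    qed
    have idx: "((?n - 1) + (?n - (m - 1))) mod ?n = ?n - m"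
    proof -
      have "(?n - 1) + (?n - (m - 1)) = (?n - m) + ?n" using m n2 by arith
      then show ?thesis using m by simp
    qed
    have "cscale (\<zeta> * \<zeta> ^ (m - 1)) (R ?b 1 ** R ?b (m - 1)) = cscale (\<zeta> ^ m) (R ?b m)"
      using Bm_mult[OF z, of "?n - 1" "?n - (m - 1)"] unfolding idx a b c
      by (simp add: cscale_mm_left cscale_mm_right cscale_mult mult.commute)
    moreover have "\<zeta> * \<zeta> ^ (m - 1) = \<zeta> ^ m" using m by (cases m) auto
    ultimately show "R ?b 1 ** R ?b (m - 1) = R ?b m"
      using cscale_cancel[of "\<zeta> ^ m"] z0 by simp
  qed
  show "R ?b (?n - 1) ** R ?b 1 = cscale ?b (mat 1)"
  proof -
    have a: "Bm \<zeta> 1 = cscale (\<zeta> ^ (?n - 1)) (R ?b (?n - 1))"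
      using Bm_R[OF z, of 1] n2 by simp
    have b: "Bm \<zeta> (?n - 1) = cscale \<zeta> (R ?b 1)"
      using Bm_R[OF z, of "?n - 1"] n2 by simp
    have idx: "(1 + (?n - 1)) mod ?n = 0" using n2 by simp
    have "cscale (\<zeta> ^ (?n - 1) * \<zeta>) (R ?b (?n - 1) ** R ?b 1) = mat 1"
      using Bm_mult[OF z, of 1 "?n - 1"] unfolding idx a b Bm_0
      by (simp add: cscale_mm_left cscale_mm_right cscale_mult mult.commute)
    moreover have "\<zeta> ^ (?n - 1) * \<zeta> = \<zeta> ^ ?n"
    proof -
      have e: "Suc (?n - 1) = ?n" using n2 by simp
      have "\<zeta> ^ (?n - 1) * \<zeta> = \<zeta> ^ Suc (?n - 1)" by (simp only: power_Suc2)
      then show ?thesis unfolding e .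
    qed
    ultimately have h: "cscale (\<zeta> ^ ?n) (R ?b (?n - 1) ** R ?b 1) = mat 1" by simp
    have "?b * \<zeta> ^ ?n = 1" using unit_pow_cnj[OF z, of ?n] by (simp add: mult.commute)
    then have "cscale ?b (cscale (\<zeta> ^ ?n) (R ?b (?n - 1) ** R ?b 1)) = R ?b (?n - 1) ** R ?b 1"
      by (simp add: cscale_mult)
    then show ?thesis using h by simp
  qed
qed


lemma beta_rels:
  assumes n2: "2 \<le> CARD('n)" and b: "\<beta> \<in> {1, -1, -\<i>}"
  shows "(\<forall>m. 2 \<le> m \<and> m \<le> CARD('n) - 1 \<longrightarrow> R \<beta> 1 ** R \<beta> (m - 1) = R \<beta> m)
     \<and> R \<beta> (CARD('n) - 1) ** R \<beta> 1 = cscale \<beta> (mat 1)"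
proof -
  let ?n = "CARD('n)"
  have n: "real ?n > 0" by simp
  obtain \<zeta> where z: "norm \<zeta> = 1" and zb: "cnj (\<zeta> ^ ?n) = \<beta>"
  proof -
    consider "\<beta> = 1" | "\<beta> = -1" | "\<beta> = -\<i>" using b by blast
    then show ?thesis
    proof cases
      case 1 then show ?thesis using that[of 1] by simp
    next
      case 2
      have "cis (pi / real ?n) ^ ?n = cis pi" using n by (simp add: Complex.DeMoivre)
      then show ?thesis using that[of "cis (pi / real ?n)"] 2 by simp
    next
      case 3
      have "cis (pi / (2 * real ?n)) ^ ?n = cis (pi / 2)" using n by (simp add: Complex.DeMoivre)
      then show ?thesis using that[of "cis (pi / (2 * real ?n))"] 3 by simp
    qed
  qed
  show ?thesis using rels[OF z n2] unfolding zb .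
qed

lemma T_rels:
  assumes n2: "2 \<le> CARD('n)"
  shows "(\<forall>m. 2 \<le> m \<and> m \<le> CARD('n) - 1 \<longrightarrow> T 1 ** T (m - 1) = T m)
     \<and> T (CARD('n) - 1) ** T 1 = 0
     \<and> cadj (T 1) ** T 1 + T (CARD('n) - 1) ** cadj (T (CARD('n) - 1)) = mat 1"
proof (intro conjI allI impI)
  let ?n = "CARD('n)"
  fix m assume m: "2 \<le> m \<and> m \<le> ?n - 1"
  have "\<And>\<beta>. \<beta> \<in> {1, -1, -\<i>} \<Longrightarrow>
      T 1 ** T (m - 1) + cscale \<beta> (T 1 ** cadj (T (?n - (m - 1))) + cadj (T (?n - 1)) ** T (m - 1))
        + cscale (\<beta>^2) (cadj (T (?n - 1)) ** cadj (T (?n - (m - 1))))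
      = T m + cscale \<beta> (cadj (T (?n - m)))"
  proof -
    fix \<beta> :: complex assume b: "\<beta> \<in> {1, -1, -\<i>}"
    have "R \<beta> 1 ** R \<beta> (m - 1) = R \<beta> m" using beta_rels[OF n2 b] m by blast
    then show "T 1 ** T (m - 1) + cscale \<beta> (T 1 ** cadj (T (?n - (m - 1))) + cadj (T (?n - 1)) ** T (m - 1))
        + cscale (\<beta>^2) (cadj (T (?n - 1)) ** cadj (T (?n - (m - 1))))
      = T m + cscale \<beta> (cadj (T (?n - m)))"
      unfolding R_def expand2 .
  qed
  from quad3[OF this] show "T 1 ** T (m - 1) = T m" by blast
next
  let ?n = "CARD('n)"
  have e: "?n - (?n - 1) = 1" using n2 by simp
  have "\<And>\<beta>. \<beta> \<in> {1, -1, -\<i>} \<Longrightarrow>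
      T (?n - 1) ** T 1 + cscale \<beta> (T (?n - 1) ** cadj (T (?n - 1)) + cadj (T 1) ** T 1)
        + cscale (\<beta>^2) (cadj (T 1) ** cadj (T (?n - 1)))
      = 0 + cscale \<beta> (mat 1)"
  proof -
    fix \<beta> :: complex assume b: "\<beta> \<in> {1, -1, -\<i>}"
    have "R \<beta> (?n - 1) ** R \<beta> 1 = cscale \<beta> (mat 1)" using beta_rels[OF n2 b] by blast
    then show "T (?n - 1) ** T 1 + cscale \<beta> (T (?n - 1) ** cadj (T (?n - 1)) + cadj (T 1) ** T 1)
        + cscale (\<beta>^2) (cadj (T 1) ** cadj (T (?n - 1)))
      = 0 + cscale \<beta> (mat 1)"
      unfolding R_def expand2 e by simp
  qed
  from quad3[OF this]
  show "T (?n - 1) ** T 1 = 0" and "cadj (T 1) ** T 1 + T (?n - 1) ** cadj (T (?n - 1)) = mat 1"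
    by (auto simp: add.commute)
qed

end



primrec mp :: "complex^'a^'a \<Rightarrow> nat \<Rightarrow> complex^'a^'a" where
  "mp X 0 = mat 1"
| "mp X (Suc k) = X ** mp X k"

lemma mp_add: "mp X (a + b) = mp X a ** mp X b"
  by (induction a) (simp_all add: matrix_mul_assoc)

lemma mp_Suc_right: "mp X (Suc k) = mp X k ** X"
  using mp_add[of X k 1] by simp

lemma mp_comm: "X ** mp X k = mp X k ** X"
  using mp_Suc_right[of X k] by simp

lemma cadj_mp: "cadj (mp X k) = mp (cadj X) k"
  by (induction k) (simp_all add: cadj_mult mp_comm)

lemma mp_mv_Suc: "mp X (Suc k) *v x = mp X k *v (X *v x)"
  by (simp add: mp_comm matrix_vector_mul_assoc)

lemma mp_mv_Suc': "mp X (Suc k) *v x = X *v (mp X k *v x)"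
  by (simp add: matrix_vector_mul_assoc)

lemma mp_mv_add: "mp X (a + b) *v x = mp X a *v (mp X b *v x)"
  by (simp add: mp_add matrix_vector_mul_assoc)

lemma ci_adj': "ci (A *v x) y = ci x (cadj A *v y)"
  using ci_adj[of x "cadj A" y] by simp

context iso
begin

lemma shm_big: "CARD('n) \<le> d \<Longrightarrow> (shm d :: complex^('n::{finite,linorder})^('n::{finite,linorder})) = 0"
proof -
  assume d: "CARD('n) \<le> d"
  have h: "(shm d :: complex^('n::{finite,linorder})^('n::{finite,linorder})) $ i $ j = 0" for i j
  proof -
    have "idx i < CARD('n)" by (rule idx_less)
    then have "idx i \<noteq> idx j + d" using d by linarith
    then show ?thesis by (simp add: shm_nth)
  qed
  then show ?thesis by (simp add: vec_eq_iff)
qed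

lemma T_facts:
  "(\<forall>m. m \<le> CARD('n) - 1 \<longrightarrow> T m = mp (T 1) m)
   \<and> mp (T 1) CARD('n) = 0
   \<and> cadj (T 1) ** T 1 + mp (T 1) (CARD('n) - 1) ** cadj (mp (T 1) (CARD('n) - 1)) = mat 1"
proof (cases "CARD('n) = 1")
  case True
  have "shm 1 = (0 :: complex^('n::{finite,linorder})^('n::{finite,linorder}))" using shm_big[of 1] True by simp
  then have T1: "T 1 = 0" using phi_0 by (simp add: T_def)
  have T0: "T 0 = mat 1" by (simp add: T_def shm_0 unital)
  show ?thesis using True T1 T0 by auto
next
  case False
  then have n2: "2 \<le> CARD('n)" using zero_less_card_finite[where 'a='n] by linarith
  note rel = T_rels[OF n2]
  have T0: "T 0 = mat 1" by (simp add: T_def shm_0 unital)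
  have pw: "m \<le> CARD('n) - 1 \<longrightarrow> T m = mp (T 1) m" for m
  proof (induction m)
    case 0 then show ?case using T0 by simp
  next
    case (Suc m)
    show ?case
    proof
      assume sm: "Suc m \<le> CARD('n) - 1"
      show "T (Suc m) = mp (T 1) (Suc m)"
      proof (cases "m = 0")
        case True then show ?thesis by simp
      next
        case False
        then have "2 \<le> Suc m \<and> Suc m \<le> CARD('n) - 1" using sm by simp
        then have "T 1 ** T (Suc m - 1) = T (Suc m)" using rel by blast
        then have "T 1 ** T m = T (Suc m)" by simp
        then show ?thesis using Suc sm by simp
      qed
    qed
  qed
  have Tn1: "T (CARD('n) - 1) = mp (T 1) (CARD('n) - 1)" using pw by blast
  have "mp (T 1) CARD('n) = mp (T 1) (CARD('n) - 1) ** T 1"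
    using mp_Suc_right[of "T 1" "CARD('n) - 1"] n2 by simp
  then have nil: "mp (T 1) CARD('n) = 0" using rel Tn1 by simp
  have idt: "cadj (T 1) ** T 1 + mp (T 1) (CARD('n) - 1) ** cadj (mp (T 1) (CARD('n) - 1)) = mat 1"
    using rel unfolding Tn1 by blast
  show ?thesis using pw nil idt by blast
qed

end


section \<open>Unitary similarity to the shift\<close>

lemma shm_mult: "shm 1 ** shm d = (shm (Suc d) :: complex^('n::{finite,linorder})^('n::{finite,linorder}))"
proof -
  have e: "(\<Sum>k\<in>UNIV. (shm 1 :: complex^('n::{finite,linorder})^('n::{finite,linorder})) $ i $ k * (shm d :: complex^('n::{finite,linorder})^('n::{finite,linorder})) $ k $ j)
      = (shm (Suc d) :: complex^('n::{finite,linorder})^('n::{finite,linorder})) $ i $ j" for i j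
  proof (cases "idx i = idx j + Suc d")
    case True
    then have "idx j + d < CARD('n)" using idx_less[of i] by linarith
    then obtain k0 :: 'n where k0: "idx k0 = idx j + d" using idx_surj by blast
    have "(\<Sum>k\<in>UNIV. (shm 1 :: complex^('n::{finite,linorder})^('n::{finite,linorder})) $ i $ k * (shm d :: complex^('n::{finite,linorder})^('n::{finite,linorder})) $ k $ j)
        = (\<Sum>k\<in>UNIV. if k = k0 then 1 else 0)"
    proof (intro sum.cong refl)
      fix k :: 'n
      have "(idx i = idx k + 1 \<and> idx k = idx j + d) \<longleftrightarrow> k = k0"
        using True k0 by (metis add_Suc_right add_right_cancel idx_eq_iff Suc_eq_plus1)
      then show "(shm 1 :: complex^('n::{finite,linorder})^('n::{finite,linorder})) $ i $ k * (shm d :: complex^('n::{finite,linorder})^('n::{finite,linorder})) $ k $ j = (if k = k0 then 1 else 0)"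
        by (auto simp: shm_nth)
    qed
    also have "\<dots> = 1" by simp
    finally show ?thesis using True by (simp add: shm_nth)
  next
    case False
    have z: "(shm 1 :: complex^('n::{finite,linorder})^('n::{finite,linorder})) $ i $ k * (shm d :: complex^('n::{finite,linorder})^('n::{finite,linorder})) $ k $ j = 0" for k
      using False by (auto simp: shm_nth)
    have "(\<Sum>k\<in>UNIV. (shm 1 :: complex^('n::{finite,linorder})^('n::{finite,linorder})) $ i $ k * (shm d :: complex^('n::{finite,linorder})^('n::{finite,linorder})) $ k $ j) = 0"
      by (rule sum.neutral) (use z in blast)
    then show ?thesis using False by (simp add: shm_nth)
  qed
  show ?thesis using e by (simp add: vec_eq_iff matrix_matrix_mult_def)
qed

lemma mp_shm: "mp (shm 1) d = (shm d :: complex^('n::{finite,linorder})^('n::{finite,linorder}))"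
proof (induction d)
  case 0 then show ?case by (simp add: shm_0)
next
  case (Suc d)
  have "mp (shm 1) (Suc d) = shm 1 ** mp (shm 1 :: complex^('n::{finite,linorder})^('n::{finite,linorder})) d" by (rule mp.simps(2))
  also have "\<dots> = shm 1 ** shm d" using Suc by simp
  also have "\<dots> = shm (Suc d)" by (rule shm_mult)
  finally show ?case .
qed

lemma jordan:
  fixes A :: "complex^('n::{finite,linorder})^('n::{finite,linorder})"
  assumes nil: "mp A CARD('n) = 0"
    and idt: "cadj A ** A + mp A (CARD('n) - 1) ** cadj (mp A (CARD('n) - 1)) = mat 1"
  shows "\<exists>W :: complex^('n::{finite,linorder})^('n::{finite,linorder}). cadj W ** W = mat 1 \<and> W ** cadj W = mat 1 \<and> (\<forall>d. mp A d = W ** shm d ** cadj W)"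
proof -
  let ?n = "CARD('n)"
  let ?B = "cadj A"
  have nB: "mp ?B ?n = 0" using nil by (simp add: cadj_mp[symmetric])
  obtain i0 :: 'n where True by blast
  define x :: "complex^('n::{finite,linorder})" where "x = axis i0 1"
  have x0: "x \<noteq> 0" by (simp add: x_def axis_eq_0_iff)
  define P where "P j \<longleftrightarrow> mp ?B j *v x = 0" for j
  have Pn: "P ?n" by (simp add: P_def nB)
  define j1 where "j1 = (LEAST j. P j)"
  have Pj1: "P j1" unfolding j1_def by (rule LeastI[of P, OF Pn])
  have "j1 \<noteq> 0"
  proof
    assume "j1 = 0"
    then have "P 0" using Pj1 by simp
    then show False using x0 by (simp add: P_def)
  qed
  then obtain j0 where j0: "j1 = Suc j0" by (cases j1) auto
  have nPj0: "\<not> P j0" using not_less_Least[of j0 P] j0 unfolding j1_def by simp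
  define y where "y = mp ?B j0 *v x"
  have y0: "y \<noteq> 0" using nPj0 by (simp add: P_def y_def)
  have By: "?B *v y = 0" using Pj1 j0 by (simp add: P_def y_def matrix_vector_mul_assoc)
  define f0 where "f0 = (1 / norm y) *\<^sub>R y"
  have nf0: "norm f0 = 1" using y0 by (simp add: f0_def)
  have Bf0: "?B *v f0 = 0" by (simp add: f0_def mv_scaleR By)
  have Bkf0: "mp ?B k *v f0 = 0" if k1: "k \<ge> 1" for k
  proof -
    obtain k' where "k = Suc k'" using k1 by (cases k) auto
    then show ?thesis by (simp add: mp_mv_Suc Bf0 del: mp.simps(2))
  qed
  define g where "g k = mp A k *v f0" for k
  have key: "?B *v (A *v v) = v - mp A (?n - 1) *v (mp ?B (?n - 1) *v v)" for v
  proof -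
    have "?B ** A = mat 1 - mp A (?n - 1) ** cadj (mp A (?n - 1))" using idt by (simp add: algebra_simps)
    then show ?thesis
      by (simp add: matrix_vector_mul_assoc matrix_vector_mult_diff_rdistrib cadj_mp)
  qed
  have H: "?B *v g (Suc i) = g i" if i: "i < ?n - 1" and L: "mp ?B i *v g i = f0" for i
  proof -
    have "mp ?B (?n - 1) *v g i = mp ?B (?n - 1 - i) *v (mp ?B i *v g i)"
      using i mp_mv_add[of ?B "?n - 1 - i" i "g i"] by simp
    also have "\<dots> = 0" using L Bkf0 i by simp
    finally have "mp ?B (?n - 1) *v g i = 0" .
    then show ?thesis using key[of "g i"] by (simp add: g_def matrix_vector_mul_assoc[symmetric])
  qed
  have L: "j \<le> ?n - 1 \<longrightarrow> mp ?B j *v g j = f0" for j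
  proof (induction j)
    case 0 then show ?case by (simp add: g_def)
  next
    case (Suc j)
    show ?case
    proof
      assume sj: "Suc j \<le> ?n - 1"
      then have Lj: "mp ?B j *v g j = f0" using Suc by simp
      have "mp ?B (Suc j) *v g (Suc j) = mp ?B j *v (?B *v g (Suc j))" by (simp add: mp_mv_Suc del: mp.simps(2))
      also have "\<dots> = mp ?B j *v g j" using H[of j] sj Lj by simp
      finally show "mp ?B (Suc j) *v g (Suc j) = f0" using Lj by simp
    qed
  qed
  have Step: "?B *v g (Suc i) = g i" if "Suc i \<le> ?n - 1" for i
    using H[of i] L[of i] that by simp
  have Gen: "\<forall>k. j \<le> k \<longrightarrow> k \<le> ?n - 1 \<longrightarrow> mp ?B j *v g k = g (k - j)" for j
  proof (induction j)
    case 0 then show ?case by simp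
  next
    case (Suc j)
    show ?case
    proof (intro allI impI)
      fix k assume jk: "Suc j \<le> k" and kn: "k \<le> ?n - 1"
      obtain k' where k': "k = Suc k'" using jk by (cases k) auto
      have "mp ?B (Suc j) *v g k = mp ?B j *v (?B *v g (Suc k'))" by (simp add: mp_mv_Suc k' del: mp.simps(2))
      also have "\<dots> = mp ?B j *v g k'" using Step[of k'] kn k' by simp
      also have "\<dots> = g (k' - j)" using Suc jk kn k' by simp
      finally show "mp ?B (Suc j) *v g k = g (k - Suc j)" using k' by simp
    qed
  qed
  have orth_le: "ci (g j) (g k) = (if j = k then 1 else 0)" if jk: "j \<le> k" and kn: "k \<le> ?n - 1" for j k
  proof -
    have "ci (g j) (g k) = ci f0 (mp ?B j *v g k)" by (simp add: g_def ci_adj' cadj_mp)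
    also have "\<dots> = ci f0 (g (k - j))" using Gen jk kn by simp
    finally have e: "ci (g j) (g k) = ci f0 (g (k - j))" .
    show ?thesis
    proof (cases "j = k")
      case True
      then show ?thesis using e nf0 by (simp add: g_def ci_self)
    next
      case False
      then obtain m where m: "k - j = Suc m" using jk by (cases "k - j") auto
      have "ci f0 (g (k - j)) = ci f0 (A *v g m)" by (simp add: m g_def matrix_vector_mul_assoc)
      also have "\<dots> = ci (?B *v f0) (g m)" by (simp add: ci_adj)
      also have "\<dots> = 0" by (simp add: Bf0)
      finally show ?thesis using e False by simp
    qed
  qed
  have orth: "ci (g j) (g k) = (if j = k then 1 else 0)" if "j \<le> ?n - 1" "k \<le> ?n - 1" for j k
  proof (cases "j \<le> k")
    case True then show ?thesis using orth_le that by blast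
  next
    case False
    then have "ci (g k) (g j) = 0" using orth_le[of k j] that by simp
    then have "ci (g j) (g k) = 0" using ci_cnj[of "g k" "g j"] by simp
    then show ?thesis using False by simp
  qed
  define W :: "complex^('n::{finite,linorder})^('n::{finite,linorder})" where "W = (\<chi> i l. g (idx l) $ i)"
  have WW: "cadj W ** W = mat 1"
  proof -
    have "(cadj W ** W) $ l $ l' = (mat 1 :: complex^('n::{finite,linorder})^('n::{finite,linorder})) $ l $ l'" for l l'
    proof -
      have "(cadj W ** W) $ l $ l' = ci (g (idx l)) (g (idx l'))"
        by (simp add: W_def matrix_matrix_mult_def ci_def)
      also have "\<dots> = (if idx l = idx l' then 1 else 0)"
        using orth idx_less[of l] idx_less[of l'] by simp
      finally show ?thesis by (simp add: mat_def)
    qed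
    then show ?thesis by (simp add: vec_eq_iff)
  qed
  have WW': "W ** cadj W = mat 1" using WW matrix_left_right_inverse by blast
  have AW: "A ** W = W ** shm 1"
  proof -
    have "(A ** W) $ i $ l = (W ** shm 1) $ i $ l" for i l
    proof -
      have l1: "(A ** W) $ i $ l = (A *v g (idx l)) $ i"
        by (simp add: W_def matrix_matrix_mult_def matrix_vector_mult_def)
      have l2: "A *v g (idx l) = g (Suc (idx l))" by (simp add: g_def matrix_vector_mul_assoc)
      have lhs: "(A ** W) $ i $ l = g (Suc (idx l)) $ i" using l1 l2 by simp
      show ?thesis
      proof (cases "Suc (idx l) < ?n")
        case True
        then obtain k0 :: 'n where k0: "idx k0 = Suc (idx l)" using idx_surj by blast
        have "(W ** shm 1) $ i $ l = (\<Sum>k\<in>UNIV. W $ i $ k * shm 1 $ k $ l)"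
          by (simp add: matrix_matrix_mult_def)
        also have "\<dots> = (\<Sum>k\<in>UNIV. if k = k0 then W $ i $ k else 0)"
        proof (intro sum.cong refl)
          fix k :: 'n
          have "idx k = idx l + 1 \<longleftrightarrow> k = k0" using k0 by (metis idx_eq_iff Suc_eq_plus1)
          then show "W $ i $ k * shm 1 $ k $ l = (if k = k0 then W $ i $ k else 0)"
            by (simp add: shm_nth)
        qed
        also have "\<dots> = g (Suc (idx l)) $ i" by (simp add: W_def k0)
        finally show ?thesis using lhs by simp
      next
        case False
        then have "Suc (idx l) = ?n" using idx_less[of l] by simp
        then have "g (Suc (idx l)) = 0" by (simp add: g_def nil)
        moreover have "(W ** shm 1) $ i $ l = 0"
        proof -
          have "idx k \<noteq> idx l + 1" for k :: 'n using idx_less[of k] False by simp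
          then show ?thesis by (simp add: matrix_matrix_mult_def shm_nth)
        qed
        ultimately show ?thesis using lhs by simp
      qed
    qed
    then show ?thesis by (simp add: vec_eq_iff)
  qed
  have Aeq: "A = W ** shm 1 ** cadj W"
  proof -
    have "A = A ** (W ** cadj W)" using WW' by simp
    also have "\<dots> = (A ** W) ** cadj W" by (simp add: matrix_mul_assoc)
    finally show ?thesis using AW by simp
  qed
  have pw: "mp A d = W ** shm d ** cadj W" for d
  proof (induction d)
    case 0 then show ?case using WW' by (simp add: shm_0)
  next
    case (Suc d)
    have "mp A (Suc d) = (W ** shm 1 ** cadj W) ** (W ** shm d ** cadj W)"
      using Suc Aeq by simp
    also have "\<dots> = W ** shm 1 ** (cadj W ** W) ** shm d ** cadj W"
      by (simp only: matrix_mul_assoc)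
    also have "\<dots> = W ** (shm 1 ** shm d) ** cadj W"
      using WW by (simp add: matrix_mul_assoc)
    also have "\<dots> = W ** shm (Suc d) ** cadj W" by (simp only: shm_mult)
    finally show ?case by simp
  qed
  show ?thesis using WW WW' pw by blast
qed


theorem proposition5p3:
  fixes \<phi> :: "complex^('n::{finite,linorder})^('n::{finite,linorder}) \<Rightarrow> complex^('n::{finite,linorder})^('n::{finite,linorder})"
  assumes additive: "\<And>a b. a \<in> lt_toeplitz \<Longrightarrow> b \<in> lt_toeplitz \<Longrightarrow> \<phi> (a + b) = \<phi> a + \<phi> b"
    and homogeneous: "\<And>c a. a \<in> lt_toeplitz \<Longrightarrow> \<phi> (cscale c a) = cscale c (\<phi> a)"
    and unital: "\<phi> (mat 1) = mat 1"
    and isometry: "\<And>a. a \<in> lt_toeplitz \<Longrightarrow> opnorm (\<phi> a) = opnorm a"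
  shows "\<exists>v. unitary_mat v \<and> (\<forall>a \<in> lt_toeplitz. \<phi> a = cadj v ** a ** v)"
proof -
  interpret I: iso \<phi> using additive homogeneous unital isometry by unfold_locales
  have TF: "(\<forall>m. m \<le> CARD('n) - 1 \<longrightarrow> I.T m = mp (I.T 1) m)
     \<and> mp (I.T 1) CARD('n) = 0
     \<and> cadj (I.T 1) ** I.T 1 + mp (I.T 1) (CARD('n) - 1) ** cadj (mp (I.T 1) (CARD('n) - 1)) = mat 1"
    by (rule I.T_facts)
  obtain W :: "complex^('n::{finite,linorder})^('n::{finite,linorder})"
    where WW: "cadj W ** W = mat 1" and WW': "W ** cadj W = mat 1"
      and pw: "\<forall>d. mp (I.T 1) d = W ** shm d ** cadj W"
    using jordan[of "I.T 1"] TF by blast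
  define v where "v = cadj W"
  have uv: "unitary_mat v" unfolding unitary_mat_def v_def using WW WW' by simp
  have main: "\<phi> a = cadj v ** a ** v" if a: "a \<in> lt_toeplitz" for a
  proof -
    obtain \<tau> where tau: "a = (\<Sum>d<CARD('n). cscale (\<tau> d) (shm d))" using LT_decomp[OF a] by blast
    have "\<phi> a = (\<Sum>d<CARD('n). cscale (\<tau> d) (I.T d))"
      unfolding tau by (simp add: I.phi_sum LT_scale shm_LT homogeneous I.T_def)
    also have "\<dots> = (\<Sum>d<CARD('n). cscale (\<tau> d) (W ** shm d ** cadj W))"
    proof (intro sum.cong refl)
      fix d assume "d \<in> {..<CARD('n)}"
      then have "d \<le> CARD('n) - 1" by simp
      then have "I.T d = W ** shm d ** cadj W" using TF pw by simp
      then show "cscale (\<tau> d) (I.T d) = cscale (\<tau> d) (W ** shm d ** cadj W)" by simp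
    qed
    also have "\<dots> = W ** (\<Sum>d<CARD('n). cscale (\<tau> d) (shm d)) ** cadj W"
      by (simp add: mm_sum_left mm_sum_right cscale_mm_left cscale_mm_right)
    finally show ?thesis unfolding tau v_def by simp
  qed
  show ?thesis using uv main by blast
qed

end
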